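(* Let $\Gamma$ be a connected simplicial graph which is tree-graded with respect to $\{\Gamma_i\}_{i\in I}$, with shortest path metric $d$ and basepoint $e\in V(\Gamma)$. For each $i$ let $e_i$ be the unique vertex of $\Gamma_i$ closest to $e$. Let $T_\Gamma$ be the $e$-distance tree and, for vertices $x,y$, let $\sigma_T(x,y)$ be the distance in $T_\Gamma$ between the images of $x$ and $y$, and $\sigma_I(x,y)=\sum_{i\in I}d(x'_i,y'_i)$, where $x'_i=x_{j}$ if $i=i_j\in I_x$ and $x'_i=e_i$ otherwise (similarly for $y$). Let $d'=\sigma_T+\sigma_I$. Then for all vertices $x,y$, \[ \tfrac12 d(x,y)\leq d'(x,y)\leq 2d(x,y). \]
   Context: Tree-graded: (1) every vertex and every simple loop of $\Gamma$ lies in some $\Gamma_i$ (non-empty connected subgraphs); (2) for $i\neq j$, $\Gamma_i\not\subseteq\Gamma_j$ and $|V(\Gamma_i)\cap V(\Gamma_j)|\leq 1$. For each vertex $x$ there are finite sets $I_x=\{i_0,\dots,i_k\}$ and $\{x_0,\dots,x_k=x\}$ such that every geodesic from $e$ to $x$ decomposes as $g_0\overline{g_0}g_1\cdots\overline{g_{k-1}}g_k$ with $g_j\subseteq\Gamma_{i_j}$ running from $e_{i_j}$ to $x_j$ and each $\overline{g_j}$ of length at most $1$; these are the sets $I_x$ and points $x_j$ used above. The $e$-distance tree $T_\Gamma$ is the simplicial tree obtained from $\Gamma$ by identifying vertices $x\sim y$ whenever $x,y\in\Gamma_i$ for some $i$ and $d(e_i,x)=d(e_i,y)$, equipped with its path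 metric. *)

theory Defs
  imports Complex_Main
begin

(* Graphs: vertex set V and symmetric irreflexive edge relation E (simplicial graph).
   Paths/walks are nonempty vertex lists; a walk with n+1 vertices has length n. *)

definition walk :: "('v \<Rightarrow> 'v \<Rightarrow> bool) \<Rightarrow> 'v list \<Rightarrow> bool" where
  "walk A p \<longleftrightarrow> p \<noteq> [] \<and> (\<forall>k. Suc k < length p \<longrightarrow> A (p!k) (p!Suc k))"

definition gdist :: "('v \<Rightarrow> 'v \<Rightarrow> bool) \<Rightarrow> 'v \<Rightarrow> 'v \<Rightarrow> nat" where
  "gdist A x y = (LEAST n. \<exists>p. walk A p \<and> hd p = x \<and> last p = y \<and> length p = Suc n)"

definition simplicial_graph :: "'v set \<Rightarrow> ('v \<Rightarrow> 'v \<Rightarrow> bool) \<Rightarrow> bool" where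
  "simplicial_graph V E \<longleftrightarrow>
     (\<forall>u v. E u v \<longrightarrow> u \<in> V \<and> v \<in> V) \<and> (\<forall>u v. E u v \<longrightarrow> E v u) \<and> (\<forall>u. \<not> E u u)"

definition connected_graph :: "'v set \<Rightarrow> ('v \<Rightarrow> 'v \<Rightarrow> bool) \<Rightarrow> bool" where
  "connected_graph V E \<longleftrightarrow> simplicial_graph V E \<and> V \<noteq> {} \<and>
     (\<forall>x\<in>V. \<forall>y\<in>V. \<exists>p. walk E p \<and> hd p = x \<and> last p = y)"

definition subgraph :: "'v set \<Rightarrow> ('v \<Rightarrow> 'v \<Rightarrow> bool) \<Rightarrow> 'v set \<Rightarrow> ('v \<Rightarrow> 'v \<Rightarrow> bool) \<Rightarrow> bool" where
  "subgraph V E W F \<longleftrightarrow> W \<subseteq> V \<and> (\<forall>u v. F u v \<longrightarrow> E u v \<and> u \<in> W \<and> v \<in> W) \<and>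
     (\<forall>u v. F u v \<longrightarrow> F v u)"

definition connected_subgraph :: "'v set \<Rightarrow> ('v \<Rightarrow> 'v \<Rightarrow> bool) \<Rightarrow> 'v set \<Rightarrow> ('v \<Rightarrow> 'v \<Rightarrow> bool) \<Rightarrow> bool" where
  "connected_subgraph V E W F \<longleftrightarrow> subgraph V E W F \<and> W \<noteq> {} \<and>
     (\<forall>x\<in>W. \<forall>y\<in>W. \<exists>p. walk F p \<and> hd p = x \<and> last p = y)"

(* simple loop: closed walk with at least 3 distinct vertices, no repeated vertex *)
definition simple_loop :: "('v \<Rightarrow> 'v \<Rightarrow> bool) \<Rightarrow> 'v list \<Rightarrow> bool" where
  "simple_loop E p \<longleftrightarrow> walk E p \<and> 4 \<le> length p \<and> hd p = last p \<and> distinct (butlast p)"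

definition walk_in :: "('v \<Rightarrow> 'v \<Rightarrow> bool) \<Rightarrow> 'v list \<Rightarrow> bool" where
  "walk_in F p \<longleftrightarrow> (\<forall>k. Suc k < length p \<longrightarrow> F (p!k) (p!Suc k))"

(* tree-graded w.r.t. the pieces Gamma_i = (VS i, ES i), i \<in> I *)
definition tree_graded ::
  "'v set \<Rightarrow> ('v \<Rightarrow> 'v \<Rightarrow> bool) \<Rightarrow> 'i set \<Rightarrow> ('i \<Rightarrow> 'v set) \<Rightarrow> ('i \<Rightarrow> 'v \<Rightarrow> 'v \<Rightarrow> bool) \<Rightarrow> bool" where
  "tree_graded V E I VS ES \<longleftrightarrow>
     (\<forall>i\<in>I. connected_subgraph V E (VS i) (ES i)) \<and>
     (\<forall>v\<in>V. \<exists>i\<in>I. v \<in> VS i) \<and>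
     (\<forall>p. simple_loop E p \<longrightarrow> (\<exists>i\<in>I. walk_in (ES i) p)) \<and>
     (\<forall>i\<in>I. \<forall>j\<in>I. i \<noteq> j \<longrightarrow>
        \<not> (VS i \<subseteq> VS j \<and> (\<forall>u v. ES i u v \<longrightarrow> ES j u v)) \<and>
        (\<forall>a\<in>VS i \<inter> VS j. \<forall>b\<in>VS i \<inter> VS j. a = b))"

definition entry :: "('v \<Rightarrow> 'v \<Rightarrow> bool) \<Rightarrow> ('i \<Rightarrow> 'v set) \<Rightarrow> 'v \<Rightarrow> 'i \<Rightarrow> 'v" where
  "entry E VS e i = (THE v. v \<in> VS i \<and> (\<forall>w\<in>VS i. w \<noteq> v \<longrightarrow> gdist E e v < gdist E e w))"

definition geodesic :: "('v \<Rightarrow> 'v \<Rightarrow> bool) \<Rightarrow> 'v \<Rightarrow> 'v \<Rightarrow> 'v list \<Rightarrow> bool" where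
  "geodesic E x y p \<longleftrightarrow> walk E p \<and> hd p = x \<and> last p = y \<and> length p = Suc (gdist E x y)"

(* decomp ... x ixs xs: ixs = [i_0,...,i_k] (the set I_x), xs = [x_0,...,x_k] with x_k = x, and every
   geodesic p from e to x decomposes as g_0 gbar_0 g_1 ... gbar_{k-1} g_k, where g_j = p[a j .. b j]
   is a path in Gamma_{i_j} from e_{i_j} to x_j and gbar_j = p[b j .. a (j+1)] has length \<le> 1.
   The g_j are maximal: a connecting edge gbar_j (if of length 1) is an edge of no piece. *)
definition decomp ::
  "'v set \<Rightarrow> ('v \<Rightarrow> 'v \<Rightarrow> bool) \<Rightarrow> 'i set \<Rightarrow> ('i \<Rightarrow> 'v set) \<Rightarrow> ('i \<Rightarrow> 'v \<Rightarrow> 'v \<Rightarrow> bool) \<Rightarrow> 'v \<Rightarrow>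
   'v \<Rightarrow> 'i list \<Rightarrow> 'v list \<Rightarrow> bool" where
  "decomp V E I VS ES e x ixs xs \<longleftrightarrow>
     ixs \<noteq> [] \<and> length xs = length ixs \<and> distinct ixs \<and> set ixs \<subseteq> I \<and> last xs = x \<and>
     (\<forall>p. geodesic E e x p \<longrightarrow>
        (\<exists>a b :: nat \<Rightarrow> nat. a 0 = 0 \<and> b (length ixs - 1) = length p - 1 \<and>
          (\<forall>j < length ixs. a j \<le> b j \<and> p ! (a j) = entry E VS e (ixs!j) \<and> p ! (b j) = xs!j \<and>
             (\<forall>m. a j \<le> m \<and> m \<le> b j \<longrightarrow> p!m \<in> VS (ixs!j)) \<and>
             (\<forall>m. a j \<le> m \<and> m < b j \<longrightarrow> ES (ixs!j) (p!m) (p!Suc m))) \<and>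
          (\<forall>j. Suc j < length ixs \<longrightarrow> b j \<le> a (Suc j) \<and> a (Suc j) \<le> Suc (b j) \<and>
             (a (Suc j) = Suc (b j) \<longrightarrow> (\<forall>i\<in>I. \<not> ES i (p ! b j) (p ! a (Suc j)))))))"

definition dchoice ::
  "'v set \<Rightarrow> ('v \<Rightarrow> 'v \<Rightarrow> bool) \<Rightarrow> 'i set \<Rightarrow> ('i \<Rightarrow> 'v set) \<Rightarrow> ('i \<Rightarrow> 'v \<Rightarrow> 'v \<Rightarrow> bool) \<Rightarrow> 'v \<Rightarrow>
   'v \<Rightarrow> 'i list \<times> 'v list" where
  "dchoice V E I VS ES e x = (SOME q. decomp V E I VS ES e x (fst q) (snd q))"

definition xprime ::
  "'v set \<Rightarrow> ('v \<Rightarrow> 'v \<Rightarrow> bool) \<Rightarrow> 'i set \<Rightarrow> ('i \<Rightarrow> 'v set) \<Rightarrow> ('i \<Rightarrow> 'v \<Rightarrow> 'v \<Rightarrow> bool) \<Rightarrow> 'v \<Rightarrow>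
   'v \<Rightarrow> 'i \<Rightarrow> 'v" where
  "xprime V E I VS ES e x i =
     (let ixs = fst (dchoice V E I VS ES e x); xs = snd (dchoice V E I VS ES e x) in
      if i \<in> set ixs then xs ! (THE j. j < length ixs \<and> ixs ! j = i) else entry E VS e i)"

(* sigma_I(x,y) = sum over i of d(x'_i,y'_i); only finitely many terms are nonzero *)
definition sigma_I ::
  "'v set \<Rightarrow> ('v \<Rightarrow> 'v \<Rightarrow> bool) \<Rightarrow> 'i set \<Rightarrow> ('i \<Rightarrow> 'v set) \<Rightarrow> ('i \<Rightarrow> 'v \<Rightarrow> 'v \<Rightarrow> bool) \<Rightarrow> 'v \<Rightarrow>
   'v \<Rightarrow> 'v \<Rightarrow> nat" where
  "sigma_I V E I VS ES e x y =
     (\<Sum>i \<in> {i\<in>I. xprime V E I VS ES e x i \<noteq> xprime V E I VS ES e y i}.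
        gdist E (xprime V E I VS ES e x i) (xprime V E I VS ES e y i))"

(* e-distance tree: identify x ~ y if x,y \<in> Gamma_i and d(e_i,x) = d(e_i,y); take generated equivalence *)
definition tid ::
  "'v set \<Rightarrow> ('v \<Rightarrow> 'v \<Rightarrow> bool) \<Rightarrow> 'i set \<Rightarrow> ('i \<Rightarrow> 'v set) \<Rightarrow> 'v \<Rightarrow> 'v \<Rightarrow> 'v \<Rightarrow> bool" where
  "tid V E I VS e x y \<longleftrightarrow> x \<in> V \<and> y \<in> V \<and>
     (\<exists>i\<in>I. x \<in> VS i \<and> y \<in> VS i \<and> gdist E (entry E VS e i) x = gdist E (entry E VS e i) y)"

definition tclass ::
  "'v set \<Rightarrow> ('v \<Rightarrow> 'v \<Rightarrow> bool) \<Rightarrow> 'i set \<Rightarrow> ('i \<Rightarrow> 'v set) \<Rightarrow> 'v \<Rightarrow> 'v \<Rightarrow> 'v set" where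
  "tclass V E I VS e x = {y. (tid V E I VS e)\<^sup>*\<^sup>* x y}"

definition tadj ::
  "'v set \<Rightarrow> ('v \<Rightarrow> 'v \<Rightarrow> bool) \<Rightarrow> 'i set \<Rightarrow> ('i \<Rightarrow> 'v set) \<Rightarrow> 'v \<Rightarrow> 'v set \<Rightarrow> 'v set \<Rightarrow> bool" where
  "tadj V E I VS e C D \<longleftrightarrow> C \<in> tclass V E I VS e ` V \<and> D \<in> tclass V E I VS e ` V \<and> C \<noteq> D \<and>
     (\<exists>u\<in>C. \<exists>v\<in>D. E u v)"

definition sigma_T ::
  "'v set \<Rightarrow> ('v \<Rightarrow> 'v \<Rightarrow> bool) \<Rightarrow> 'i set \<Rightarrow> ('i \<Rightarrow> 'v set) \<Rightarrow> 'v \<Rightarrow> 'v \<Rightarrow> 'v \<Rightarrow> nat" where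
  "sigma_T V E I VS e x y = gdist (tadj V E I VS e) (tclass V E I VS e x) (tclass V E I VS e y)"

definition dprime ::
  "'v set \<Rightarrow> ('v \<Rightarrow> 'v \<Rightarrow> bool) \<Rightarrow> 'i set \<Rightarrow> ('i \<Rightarrow> 'v set) \<Rightarrow> ('i \<Rightarrow> 'v \<Rightarrow> 'v \<Rightarrow> bool) \<Rightarrow> 'v \<Rightarrow>
   'v \<Rightarrow> 'v \<Rightarrow> nat" where
  "dprime V E I VS ES e x y = sigma_T V E I VS e x y + sigma_I V E I VS ES e x y"

end

theory Submission
  imports Defs
begin


lemma walk_iff: "walk A p \<longleftrightarrow> p \<noteq> [] \<and> successively A p"
  by (simp add: walk_def successively_conv_nth)

lemma walk_in_iff: "walk_in A p \<longleftrightarrow> successively A p"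
  by (simp add: walk_in_def successively_conv_nth)

lemma walk_single[simp]: "walk A [x]"
  by (simp add: walk_iff)

lemma walk_Cons2[simp]: "walk A (x # y # p) \<longleftrightarrow> A x y \<and> walk A (y # p)"
  by (simp add: walk_iff)

lemma walk_nth: "walk A p \<Longrightarrow> Suc k < length p \<Longrightarrow> A (p!k) (p!Suc k)"
  by (simp add: walk_def)

lemma walk_append:
  assumes "walk A p" "walk A q" "last p = hd q"
  shows "walk A (p @ tl q)"
proof (cases "tl q")
  case Nil then show ?thesis using assms by simp
next
  case (Cons z zs)
  then have q: "q = hd q # z # zs" using assms(2) unfolding walk_iff
    by (metis list.collapse)
  have "successively A (tl q)" using assms(2) q unfolding walk_iff
    by (metis list.sel(3) successively.simps(3))
  moreover have "A (hd q) z" using assms(2) q unfolding walk_iff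
    by (metis successively.simps(3))
  ultimately show ?thesis using assms Cons unfolding walk_iff
    by (auto simp: successively_append_iff)
qed

lemma walk_append2:
  assumes "walk A p" "walk A q" "A (last p) (hd q)"
  shows "walk A (p @ q)"
  using assms unfolding walk_iff by (auto simp: successively_append_iff)

lemma walk_rev:
  assumes "\<And>u v. A u v \<Longrightarrow> A v u" "walk A p"
  shows "walk A (rev p)"
proof -
  have "successively A p" "p \<noteq> []" using assms(2) unfolding walk_iff by auto
  then have "successively (\<lambda>x y. A y x) p" using assms(1) by (auto elim!: successively_mono)
  then show ?thesis using \<open>p \<noteq> []\<close> unfolding walk_iff by simp
qed

lemma walk_take: "walk A p \<Longrightarrow> 0 < k \<Longrightarrow> walk A (take k p)"
  unfolding walk_def by auto

lemma walk_drop: "walk A p \<Longrightarrow> k < length p \<Longrightarrow> walk A (drop k p)"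
  unfolding walk_def by auto

lemma walk_mono: "walk A p \<Longrightarrow> (\<And>u v. A u v \<Longrightarrow> B u v) \<Longrightarrow> walk B p"
  unfolding walk_def by auto

lemma last_app_tl: "p \<noteq> [] \<Longrightarrow> q \<noteq> [] \<Longrightarrow> last p = hd q \<Longrightarrow> last (p @ tl q) = last q"
  by (cases q) auto

lemma hd_app_tl: "p \<noteq> [] \<Longrightarrow> hd (p @ tl q) = hd p"
  by simp

lemma last_take_Suc: "k < length q \<Longrightarrow> last (take (Suc k) q) = q!k"
  by (simp add: take_Suc_conv_app_nth)

lemma walk_appD1: "walk A (xs @ ys) \<Longrightarrow> xs \<noteq> [] \<Longrightarrow> walk A xs"
  unfolding walk_iff by (simp add: successively_append_iff)

lemma walk_appD2: "walk A (xs @ ys) \<Longrightarrow> ys \<noteq> [] \<Longrightarrow> walk A ys"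
  unfolding walk_iff by (simp add: successively_append_iff)

lemma ends_split: "p \<noteq> [] \<Longrightarrow> hd p \<noteq> last p \<Longrightarrow> \<exists>mid. p = hd p # mid @ [last p]"
proof (cases p)
  case (Cons a r)
  assume "hd p \<noteq> last p"
  then have "r \<noteq> []" using Cons by auto
  then have "r = butlast r @ [last r]" by simp
  then show ?thesis using Cons \<open>r \<noteq> []\<close> by (intro exI[of _ "butlast r"]) simp
qed simp

lemma mid_nth: "0 < k \<Longrightarrow> k \<le> length mid \<Longrightarrow> (u # mid @ [v])!k \<in> set mid"
  by (cases k) (auto simp: nth_append)

lemma gdist_le:
  assumes "walk A p" "hd p = x" "last p = y"
  shows "gdist A x y \<le> length p - 1"
proof -
  have "length p = Suc (length p - 1)" using assms(1) by (cases p) (auto simp: walk_def)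
  then show ?thesis unfolding gdist_def using assms by (intro Least_le) blast
qed

lemma gdist_ex:
  assumes "walk A p" "hd p = x" "last p = y"
  shows "\<exists>q. walk A q \<and> hd q = x \<and> last q = y \<and> length q = Suc (gdist A x y)"
proof -
  have "length p = Suc (length p - 1)" using assms(1) by (cases p) (auto simp: walk_def)
  then have "\<exists>n. \<exists>q. walk A q \<and> hd q = x \<and> last q = y \<and> length q = Suc n" using assms by blast
  then show ?thesis unfolding gdist_def by (rule LeastI_ex)
qed

lemma gdist_triangle:
  assumes "walk A p" "hd p = x" "last p = y" "walk A q" "hd q = y" "last q = z"
  shows "gdist A x z \<le> gdist A x y + gdist A y z"
proof -
  obtain p' where p': "walk A p'" "hd p' = x" "last p' = y" "length p' = Suc (gdist A x y)"
    using gdist_ex[OF assms(1-3)] by blast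
  obtain q' where q': "walk A q'" "hd q' = y" "last q' = z" "length q' = Suc (gdist A y z)"
    using gdist_ex[OF assms(4-6)] by blast
  have w: "walk A (p' @ tl q')" using walk_append[of A p' q'] p' q' by simp
  have ne: "p' \<noteq> []" "q' \<noteq> []" using p' q' by (auto simp: walk_def)
  have "hd (p' @ tl q') = x" using p' ne by simp
  moreover have "last (p' @ tl q') = z" using last_app_tl[of p' q'] p' q' ne by simp
  ultimately have "gdist A x z \<le> length (p' @ tl q') - 1" using gdist_le[OF w] by blast
  then show ?thesis using p' q' by simp
qed

lemma gdist_sym:
  assumes "\<And>u v. A u v \<Longrightarrow> A v u"
  shows "gdist A x y = gdist A y x"
proof -
  have "\<And>n x y. (\<exists>p. walk A p \<and> hd p = x \<and> last p = y \<and> length p = Suc n) \<Longrightarrow>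
        (\<exists>p. walk A p \<and> hd p = y \<and> last p = x \<and> length p = Suc n)"
  proof -
    fix n x y assume "\<exists>p. walk A p \<and> hd p = x \<and> last p = y \<and> length p = Suc n"
    then obtain p where "walk A p" "hd p = x" "last p = y" "length p = Suc n" by blast
    then show "\<exists>p. walk A p \<and> hd p = y \<and> last p = x \<and> length p = Suc n"
    proof (intro exI[of _ "rev p"] conjI)
      show "walk A (rev p)" using walk_rev[of A p] assms \<open>walk A p\<close> by blast
      show "hd (rev p) = y" using \<open>last p = y\<close> by (simp add: hd_rev)
      show "last (rev p) = x" using \<open>hd p = x\<close> by (simp add: last_rev)
      show "length (rev p) = Suc n" using \<open>length p = Suc n\<close> by simp
    qed
  qed
  note dir = this
  have "\<And>n. (\<exists>p. walk A p \<and> hd p = x \<and> last p = y \<and> length p = Suc n) =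
             (\<exists>p. walk A p \<and> hd p = y \<and> last p = x \<and> length p = Suc n)"
    using dir[where x=x and y=y] dir[where x=y and y=x] by (rule iffI)
  then show ?thesis unfolding gdist_def by simp
qed


lemma geod_distinct:
  assumes w: "walk A q" and l: "length q = Suc (gdist A (hd q) (last q))"
  shows "distinct q"
proof (rule ccontr)
  assume "\<not> distinct q"
  then obtain i j where ij: "i < j" "j < length q" "q!i = q!j"
    by (metis distinct_conv_nth linorder_neqE_nat)
  define q' where "q' = take (Suc i) q @ tl (drop j q)"
  have ne: "q \<noteq> []" using w by (simp add: walk_def)
  have w1: "walk A (take (Suc i) q)" using walk_take[OF w] by simp
  have w2: "walk A (drop j q)" using walk_drop[OF w ij(2)] .
  have lt: "last (take (Suc i) q) = q!i" using ij last_take_Suc[of i q] by simp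
  have hd2: "hd (drop j q) = q!j" using ij by (simp add: hd_drop_conv_nth)
  have wq': "walk A q'" unfolding q'_def using walk_append[OF w1 w2] lt hd2 ij by simp
  have ne1: "take (Suc i) q \<noteq> []" using ne by simp
  have ne2: "drop j q \<noteq> []" using ij by simp
  have "hd q' = hd q" unfolding q'_def using ne1 ne by (simp add: hd_take)
  moreover have "last q' = last q" unfolding q'_def using last_app_tl[OF ne1 ne2] lt hd2 ij
    by simp
  ultimately have "gdist A (hd q) (last q) \<le> length q' - 1" using gdist_le[OF wq'] by simp
  moreover have "length q' = Suc i + (length q - j - 1)" unfolding q'_def using ij by simp
  ultimately show False using l ij by simp
qed

lemma geod_split:
  assumes w: "walk A q" and l: "length q = Suc (gdist A (hd q) (last q))" and k: "k < length q"
  shows "gdist A (hd q) (q!k) = k \<and> gdist A (q!k) (last q) = length q - 1 - k"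
proof -
  have w1: "walk A (take (Suc k) q)" using walk_take[OF w] by simp
  have w2: "walk A (drop k q)" using walk_drop[OF w k] .
  have ne: "q \<noteq> []" using w by (simp add: walk_def)
  have h1: "hd (take (Suc k) q) = hd q" using ne by (simp add: hd_take)
  have l1: "last (take (Suc k) q) = q!k" using k last_take_Suc[of k q] by simp
  have h2: "hd (drop k q) = q!k" using k by (simp add: hd_drop_conv_nth)
  have l2: "last (drop k q) = last q" using k by simp
  have a: "gdist A (hd q) (q!k) \<le> k" using gdist_le[OF w1 h1 l1] k by simp
  have b: "gdist A (q!k) (last q) \<le> length q - 1 - k" using gdist_le[OF w2 h2 l2] k by simp
  have c: "gdist A (hd q) (last q) \<le> gdist A (hd q) (q!k) + gdist A (q!k) (last q)"
    using gdist_triangle[OF w1 h1 l1 w2 h2 l2] .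
  show ?thesis using a b c l k by linarith
qed

locale TG =
  fixes V :: "'v set" and E :: "'v \<Rightarrow> 'v \<Rightarrow> bool"
    and I :: "'i set" and VS :: "'i \<Rightarrow> 'v set" and ES :: "'i \<Rightarrow> 'v \<Rightarrow> 'v \<Rightarrow> bool"
  assumes conn: "connected_graph V E" and tg: "tree_graded V E I VS ES"
begin

abbreviation d where "d \<equiv> gdist E"

lemma E_V: "E u v \<Longrightarrow> u \<in> V \<and> v \<in> V"
  using conn by (simp add: connected_graph_def simplicial_graph_def)
lemma E_sym: "E u v \<Longrightarrow> E v u"
  using conn by (simp add: connected_graph_def simplicial_graph_def)
lemma E_irr: "\<not> E u u"
  using conn by (simp add: connected_graph_def simplicial_graph_def)
lemma conn_walk: "x \<in> V \<Longrightarrow> y \<in> V \<Longrightarrow> \<exists>p. walk E p \<and> hd p = x \<and> last p = y"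
  using conn by (simp add: connected_graph_def)

lemma piece: "i \<in> I \<Longrightarrow> connected_subgraph V E (VS i) (ES i)"
  using tg by (simp add: tree_graded_def)
lemma ES_E: "i \<in> I \<Longrightarrow> ES i u v \<Longrightarrow> E u v"
  using piece by (simp add: connected_subgraph_def subgraph_def)
lemma ES_VS: "i \<in> I \<Longrightarrow> ES i u v \<Longrightarrow> u \<in> VS i \<and> v \<in> VS i"
  using piece by (simp add: connected_subgraph_def subgraph_def)
lemma ES_sym: "i \<in> I \<Longrightarrow> ES i u v \<Longrightarrow> ES i v u"
  using piece by (simp add: connected_subgraph_def subgraph_def)
lemma VS_V: "i \<in> I \<Longrightarrow> VS i \<subseteq> V"
  using piece by (simp add: connected_subgraph_def subgraph_def)
lemma VS_conn: "i \<in> I \<Longrightarrow> x \<in> VS i \<Longrightarrow> y \<in> VS i \<Longrightarrow> \<exists>p. walk (ES i) p \<and> hd p = x \<and> last p = y"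
  using piece by (simp add: connected_subgraph_def)
lemma cover: "v \<in> V \<Longrightarrow> \<exists>i\<in>I. v \<in> VS i"
  using tg by (simp add: tree_graded_def)
lemma loop: "simple_loop E p \<Longrightarrow> \<exists>i\<in>I. walk_in (ES i) p"
  using tg by (simp add: tree_graded_def)
lemma inter: "i \<in> I \<Longrightarrow> j \<in> I \<Longrightarrow> a \<in> VS i \<Longrightarrow> a \<in> VS j \<Longrightarrow> b \<in> VS i \<Longrightarrow> b \<in> VS j
   \<Longrightarrow> a \<noteq> b \<Longrightarrow> i = j"
proof (rule ccontr)
  assume *: "i \<in> I" "j \<in> I" "a \<in> VS i" "a \<in> VS j" "b \<in> VS i" "b \<in> VS j" "a \<noteq> b" "i \<noteq> j"
  have "\<forall>i\<in>I. \<forall>j\<in>I. i \<noteq> j \<longrightarrow> (\<forall>a\<in>VS i \<inter> VS j. \<forall>b\<in>VS i \<inter> VS j. a = b)"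
    using tg unfolding tree_graded_def by simp
  then show False using * by simp
qed
lemma ES_unique: "i \<in> I \<Longrightarrow> j \<in> I \<Longrightarrow> ES i u v \<Longrightarrow> ES j u v \<Longrightarrow> i = j"
proof -
  assume a: "i \<in> I" "j \<in> I" "ES i u v" "ES j u v"
  have "u \<noteq> v" using ES_E[OF a(1,3)] E_irr by auto
  then show "i = j" using inter[OF a(1,2), of u v] ES_VS[OF a(1,3)] ES_VS[OF a(2,4)] by simp
qed

lemma walk_set:
  assumes "walk A p" "hd p \<in> S" "\<And>u v. A u v \<Longrightarrow> v \<in> S"
  shows "set p \<subseteq> S"
proof
  fix z assume "z \<in> set p"
  then obtain k where k: "k < length p" "p!k = z" by (metis in_set_conv_nth)
  show "z \<in> S"
  proof (cases k)
    case 0 then show ?thesis using k assms(1,2) by (simp add: hd_conv_nth walk_def)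
  next
    case (Suc k') then show ?thesis using k assms walk_nth[of A p k'] by auto
  qed
qed

lemma walk_V: "walk E p \<Longrightarrow> hd p \<in> V \<Longrightarrow> set p \<subseteq> V"
  using walk_set[of E p V] E_V by blast
lemma walkES_VS: "i \<in> I \<Longrightarrow> walk (ES i) p \<Longrightarrow> hd p \<in> VS i \<Longrightarrow> set p \<subseteq> VS i"
  using walk_set[of "ES i" p "VS i"] ES_VS by blast
lemma walk_in_VS:
  assumes "i \<in> I" "walk_in (ES i) L" "2 \<le> length L"
  shows "set L \<subseteq> VS i"
proof -
  have w: "walk (ES i) L" using assms by (auto simp: walk_def walk_in_def)
  have "ES i (L!0) (L!Suc 0)" using walk_nth[OF w] assms(3) by simp
  then have "L!0 \<in> VS i" using ES_VS[OF assms(1)] by blast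
  then have "hd L \<in> VS i" using assms(3) by (cases L) auto
  then show ?thesis using walkES_VS[OF assms(1) w] by simp
qed

lemma walkE_sym: "walk E p \<Longrightarrow> walk E (rev p)"
  using walk_rev[of E p] E_sym by blast

lemma d_sym: "d x y = d y x"
  using gdist_sym[of E x y] E_sym by blast

lemma geo_ex: "x \<in> V \<Longrightarrow> y \<in> V \<Longrightarrow> \<exists>p. geodesic E x y p"
proof -
  assume "x \<in> V" "y \<in> V"
  then obtain p where "walk E p" "hd p = x" "last p = y" using conn_walk by blast
  from gdist_ex[OF this] show ?thesis unfolding geodesic_def by blast
qed

lemma geo_basic: "geodesic E x y p \<Longrightarrow> walk E p \<and> hd p = x \<and> last p = y \<and> length p = Suc (d x y) \<and> p \<noteq> []"
  by (auto simp: geodesic_def walk_def)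

lemma geo_distinct: "geodesic E x y p \<Longrightarrow> distinct p"
  unfolding geodesic_def using geod_distinct[of E p] by simp

lemma geo_pos: "geodesic E x y p \<Longrightarrow> k < length p \<Longrightarrow> d x (p!k) = k"
  unfolding geodesic_def using geod_split[of E p k] by simp

lemma geo_pos2: "geodesic E x y p \<Longrightarrow> k < length p \<Longrightarrow> d (p!k) y = length p - 1 - k"
  unfolding geodesic_def using geod_split[of E p k] by simp

lemma geo_take:
  assumes g: "geodesic E x y p" and k: "k < length p"
  shows "geodesic E x (p!k) (take (Suc k) p)"
proof -
  have b: "walk E p" "hd p = x" "p \<noteq> []" using geo_basic[OF g] by auto
  have "walk E (take (Suc k) p)" using walk_take[OF b(1)] by simp
  moreover have "hd (take (Suc k) p) = x" using b by (simp add: hd_take)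
  moreover have "last (take (Suc k) p) = p!k" using last_take_Suc[OF k] .
  moreover have "length (take (Suc k) p) = Suc (d x (p!k))" using geo_pos[OF g k] k by simp
  ultimately show ?thesis unfolding geodesic_def by blast
qed

lemma geo_drop:
  assumes g: "geodesic E x y p" and k: "k < length p"
  shows "geodesic E (p!k) y (drop k p)"
proof -
  have b: "walk E p" "last p = y" "p \<noteq> []" using geo_basic[OF g] by auto
  have "walk E (drop k p)" using walk_drop[OF b(1) k] .
  moreover have "hd (drop k p) = p!k" using k by (simp add: hd_drop_conv_nth)
  moreover have "last (drop k p) = y" using b k by simp
  moreover have "length (drop k p) = Suc (d (p!k) y)" using geo_pos2[OF g k] k by simp
  ultimately show ?thesis unfolding geodesic_def by blast
qed

lemma geo_rev:
  assumes g: "geodesic E x y p"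
  shows "geodesic E y x (rev p)"
proof -
  have b: "walk E p" "hd p = x" "last p = y" "length p = Suc (d x y)" using geo_basic[OF g] by auto
  have "walk E (rev p)" using walkE_sym[OF b(1)] .
  moreover have "hd (rev p) = y" using b by (simp add: hd_rev)
  moreover have "last (rev p) = x" using b by (simp add: last_rev)
  moreover have "length (rev p) = Suc (d y x)" using b d_sym[of x y] by simp
  ultimately show ?thesis unfolding geodesic_def by blast
qed

lemma geo_V: "geodesic E x y p \<Longrightarrow> x \<in> V \<Longrightarrow> set p \<subseteq> V"
  using walk_V[of p] geo_basic[of x y p] by simp

lemma d_zero: "x \<in> V \<Longrightarrow> y \<in> V \<Longrightarrow> d x y = 0 \<Longrightarrow> x = y"
proof -
  assume a: "x \<in> V" "y \<in> V" "d x y = 0"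
  then obtain p where p: "geodesic E x y p" using geo_ex by blast
  then have "length p = 1" using a geo_basic by simp
  then show "x = y" using p geo_basic[OF p] by (cases p) auto
qed

lemma d_refl: "d x x = 0"
  using gdist_le[of E "[x]" x x] by simp


lemma LL:
  assumes i: "i \<in> I" and w: "walk E (u # mid @ [v])" and dist: "distinct (u # mid @ [v])"
    and uv: "u \<in> VS i" "v \<in> VS i" and mo: "set mid \<inter> VS i = {}" and c: "mid \<noteq> [] \<or> \<not> ES i u v"
  shows False
proof -
  have uv': "u \<noteq> v" using dist by simp
  obtain Q0 where Q0: "walk (ES i) Q0" "hd Q0 = v" "last Q0 = u" using VS_conn[OF i uv(2) uv(1)] by blast
  obtain Q where Q: "walk (ES i) Q" "hd Q = v" "last Q = u" "length Q = Suc (gdist (ES i) v u)"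
    using gdist_ex[OF Q0] by blast
  have dQ: "distinct Q" using geod_distinct[of "ES i" Q] Q by simp
  have sQ: "set Q \<subseteq> VS i" using walkES_VS[OF i Q(1)] Q(2) uv(2) by simp
  have Qne: "Q \<noteq> []" using Q(1) by (simp add: walk_def)
  have "hd Q \<noteq> last Q" using Q(2,3) uv' by simp
  then obtain qm where qm: "Q = v # qm @ [u]" using ends_split[OF Qne] Q(2,3) by auto
  have wQ: "walk E Q" using walk_mono[OF Q(1)] ES_E[OF i] by blast
  define L where "L = u # mid @ [v] @ qm @ [u]"
  have L2: "L = (u # mid @ [v]) @ tl Q" unfolding L_def qm by simp
  have wL: "walk E L" unfolding L2 using walk_append[OF w wQ] qm by simp
  have len: "4 \<le> length L"
  proof (rule ccontr)
    assume "\<not> 4 \<le> length L"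
    moreover have "length L = 3 + length mid + length qm" unfolding L_def by simp
    ultimately have "length mid = 0" "length qm = 0" by linarith+
    then have "mid = []" "qm = []" by auto
    then have "ES i v u" using Q(1) qm by simp
    then show False using c \<open>mid = []\<close> ES_sym[OF i] by blast
  qed
  have hdl: "hd L = last L" unfolding L_def by simp
  have dqm: "distinct qm" "u \<notin> set qm" "v \<notin> set qm" using dQ qm by auto
  have qmV: "set qm \<subseteq> VS i" using sQ qm by auto
  have "butlast L = (u # mid @ [v]) @ qm" unfolding L_def by (simp add: butlast_append)
  moreover have "set (u # mid @ [v]) \<inter> set qm = {}" using dqm qmV mo by auto
  ultimately have dL: "distinct (butlast L)" using dist dqm by simp
  have "simple_loop E L" unfolding simple_loop_def using wL len hdl dL by blast
  then obtain j where j: "j \<in> I" "walk_in (ES j) L" using loop by blast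
  have sL: "set L \<subseteq> VS j" using walk_in_VS[OF j] len by simp
  have "u \<in> VS j" "v \<in> VS j" using sL unfolding L_def by auto
  then have ij: "i = j" using inter[OF i j(1), of u v] uv uv' by simp
  show False
  proof (cases mid)
    case (Cons a r)
    then have "a \<in> VS j" using sL unfolding L_def by auto
    then show False using mo Cons ij by auto
  next
    case Nil
    then have "ES i u v" using j(2) ij unfolding L_def walk_in_iff by simp
    then show False using c Nil by simp
  qed
qed

lemma induced:
  assumes i: "i \<in> I" and uv: "u \<in> VS i" "v \<in> VS i" "E u v"
  shows "ES i u v"
proof (rule ccontr)
  assume "\<not> ES i u v"
  moreover have "u \<noteq> v" using uv(3) E_irr by auto
  ultimately show False using LL[OF i, of u "[]" v] uv by simp
qed

lemma Kpath:
  assumes i: "i \<in> I"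
  shows "walk E p \<Longrightarrow> distinct p \<Longrightarrow> hd p \<in> VS i \<Longrightarrow> last p \<in> VS i \<Longrightarrow> set p \<subseteq> VS i"
proof (induction "length p" arbitrary: p rule: less_induct)
  case less
  obtain u rest where p: "p = u # rest" using less.prems(1) by (cases p) (auto simp: walk_def)
  show ?case
  proof (cases "rest = []")
    case True then show ?thesis using p less.prems by simp
  next
    case False
    then have "last rest \<in> VS i" using less.prems(4) p by simp
    then have "\<exists>z\<in>set rest. z \<in> VS i" using False by auto
    then obtain ys z zs where sp: "rest = ys @ z # zs" "z \<in> VS i" "\<forall>y\<in>set ys. y \<notin> VS i"
      by (rule split_list_first_propE)
    have p2: "p = (u # ys @ [z]) @ zs" using p sp by simp
    have wp: "walk E (u # ys @ [z])" using walk_appD1[of E "u # ys @ [z]" zs] less.prems(1) p2 by simp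
    have dp: "distinct (u # ys @ [z])" using less.prems(2) p2 by simp
    have "ys = []"
    proof (rule ccontr)
      assume "ys \<noteq> []"
      moreover have "u \<in> VS i" using less.prems(3) p by simp
      moreover have "set ys \<inter> VS i = {}" using sp(3) by blast
      ultimately show False using LL[OF i wp dp] sp(2) by blast
    qed
    then have p3: "p = u # (z # zs)" using p sp by simp
    have "set (z # zs) \<subseteq> VS i"
    proof (rule less.hyps)
      show "length (z # zs) < length p" using p3 by simp
      show "walk E (z # zs)" using less.prems(1) p3 walk_appD2[of E "[u]" "z#zs"] by simp
      show "distinct (z # zs)" using less.prems(2) p3 by simp
      show "hd (z # zs) \<in> VS i" using sp by simp
      show "last (z # zs) \<in> VS i" using less.prems(4) p3 by simp
    qed
    then show ?thesis using p3 less.prems(3) by simp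
  qed
qed

lemma Kwalk:
  assumes i: "i \<in> I" and "walk E p" "distinct p" "hd p \<in> VS i" "last p \<in> VS i"
  shows "walk_in (ES i) p"
proof -
  have s: "set p \<subseteq> VS i" using Kpath[OF i] assms by blast
  show ?thesis unfolding walk_in_def
  proof (intro allI impI)
    fix k assume k: "Suc k < length p"
    have "p!k \<in> VS i" "p!Suc k \<in> VS i" using s k by auto
    moreover have "E (p!k) (p!Suc k)" using walk_nth[OF assms(2) k] .
    ultimately show "ES i (p!k) (p!Suc k)" using induced[OF i] by blast
  qed
qed

lemma NW:
  assumes i: "i \<in> I" and w: "walk E (u # mid @ [v])" and uv: "u \<in> VS i" "v \<in> VS i" "u \<noteq> v"
    and mne: "mid \<noteq> []" and mo: "set mid \<inter> VS i = {}"
  shows False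
proof -
  define X where "X = {u, v} \<union> - VS i"
  define R where "R = (\<lambda>a b. E a b \<and> a \<in> X \<and> b \<in> X \<and> \<not> (a \<in> VS i \<and> b \<in> VS i))"
  define W where "W = u # mid @ [v]"
  have sW: "set W \<subseteq> X" unfolding W_def X_def using mo by auto
  have wR: "walk R W" unfolding walk_def
  proof (intro conjI allI impI)
    show "W \<noteq> []" unfolding W_def by simp
    fix k assume k: "Suc k < length W"
    have e: "E (W!k) (W!Suc k)" using walk_nth[OF w] k unfolding W_def by simp
    have x: "W!k \<in> X" "W!Suc k \<in> X" using sW k by auto
    have "W!k \<in> set mid \<or> W!Suc k \<in> set mid"
    proof (cases k)
      case 0
      have "W!Suc k \<in> set mid" unfolding W_def using mid_nth[of "Suc k" mid u v] mne 0
        by (cases mid) auto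
      then show ?thesis by blast
    next
      case (Suc k')
      have "W!k \<in> set mid" unfolding W_def using mid_nth[of k mid u v] Suc k unfolding W_def by simp
      then show ?thesis by blast
    qed
    then have "\<not> (W!k \<in> VS i \<and> W!Suc k \<in> VS i)" using mo by blast
    then show "R (W!k) (W!Suc k)" unfolding R_def using e x by blast
  qed
  obtain S where S: "walk R S" "hd S = u" "last S = v" "length S = Suc (gdist R u v)"
    using gdist_ex[OF wR] unfolding W_def by auto
  have dS: "distinct S" using geod_distinct[of R S] S by simp
  have Sne: "S \<noteq> []" using S(1) by (simp add: walk_def)
  have "hd S \<noteq> last S" using S(2,3) uv(3) by simp
  then obtain m' where m': "S = u # m' @ [v]" using ends_split[OF Sne] S(2,3) by auto
  have sS: "set S \<subseteq> X" using walk_set[OF S(1), of X] S(2) unfolding R_def X_def by auto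
  have mo': "set m' \<inter> VS i = {}"
  proof -
    have "set m' \<subseteq> X" "u \<notin> set m'" "v \<notin> set m'" using sS dS m' by auto
    then show ?thesis unfolding X_def by auto
  qed
  have wS: "walk E S" using walk_mono[OF S(1)] unfolding R_def by blast
  show False
  proof (cases "m' = []")
    case True
    then have "R u v" using S(1) m' by simp
    then show False unfolding R_def using uv by blast
  next
    case False
    then show False using LL[OF i, of u m' v] wS dS m' uv mo' by simp
  qed
qed

definition avoid where "avoid u v a b \<longleftrightarrow> E a b \<and> \<not> (a = u \<and> b = v) \<and> \<not> (a = v \<and> b = u)"

lemma avoid_sym: "avoid u v a b \<Longrightarrow> avoid u v b a"
  unfolding avoid_def using E_sym by blast

lemma BL:
  assumes e: "E u v" and nb: "\<forall>i\<in>I. \<not> ES i u v" and W: "walk (avoid u v) W" "hd W = v" "last W = u"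
  shows False
proof -
  obtain S where S: "walk (avoid u v) S" "hd S = v" "last S = u" "length S = Suc (gdist (avoid u v) v u)"
    using gdist_ex[OF W] by blast
  have dS: "distinct S" using geod_distinct[of "avoid u v" S] S by simp
  have Sne: "S \<noteq> []" using S(1) by (simp add: walk_def)
  have uv: "u \<noteq> v" using e E_irr by auto
  have "hd S \<noteq> last S" using S(2,3) uv by simp
  then obtain m' where m': "S = v # m' @ [u]" using ends_split[OF Sne] S(2,3) by auto
  have mne: "m' \<noteq> []"
  proof
    assume "m' = []"
    then have "avoid u v v u" using S(1) m' by simp
    then show False unfolding avoid_def by blast
  qed
  have wS: "walk E S" using walk_mono[OF S(1)] unfolding avoid_def by blast
  define L where "L = S @ [v]"
  have wL: "walk E L" unfolding L_def using walk_append2[OF wS, of "[v]"] e S(3) by simp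
  have len: "4 \<le> length L" unfolding L_def m' using mne by (cases m') auto
  have "hd L = last L" unfolding L_def using S(2) Sne by simp
  moreover have "distinct (butlast L)" unfolding L_def using dS by simp
  ultimately have "simple_loop E L" unfolding simple_loop_def using wL len by blast
  then obtain j where j: "j \<in> I" "walk_in (ES j) L" using loop by blast
  then have "successively (ES j) (S @ [v])" unfolding L_def walk_in_iff by simp
  then have "ES j u v" using S(3) Sne by (simp add: successively_append_iff)
  then show False using nb j by blast
qed

end




context TG begin

lemma min_ex:
  assumes i: "i \<in> I"
  shows "\<exists>m\<in>VS i. \<forall>w\<in>VS i. d b m \<le> d b w"
proof -
  have ne: "VS i \<noteq> {}" using piece[OF i] by (simp add: connected_subgraph_def)
  then obtain w0 where "w0 \<in> VS i" by blast
  then have ex: "\<exists>n. \<exists>w\<in>VS i. d b w = n" by blast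
  define n where "n = (LEAST n. \<exists>w\<in>VS i. d b w = n)"
  obtain m where m: "m \<in> VS i" "d b m = n" using LeastI_ex[OF ex] unfolding n_def by blast
  have "\<forall>w\<in>VS i. d b m \<le> d b w"
  proof
    fix w assume "w \<in> VS i"
    then have "n \<le> d b w" unfolding n_def by (intro Least_le) blast
    then show "d b m \<le> d b w" using m by simp
  qed
  then show ?thesis using m by blast
qed

lemma FM:
  assumes i: "i \<in> I" and b: "b \<in> V" and m: "m \<in> VS i" "\<forall>w\<in>VS i. d b m \<le> d b w"
    and q: "geodesic E b w q" and w: "w \<in> VS i" and av: "set (butlast q) \<inter> VS i = {}"
  shows "w = m"
proof (rule ccontr)
  assume wm: "w \<noteq> m"
  have qb: "walk E q" "hd q = b" "last q = w" "length q = Suc (d b w)" "q \<noteq> []" using geo_basic[OF q] by auto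
  have mV: "m \<in> V" using VS_V[OF i] m by auto
  show False
  proof (cases "b \<in> VS i")
    case True
    have "length q = 1"
    proof (rule ccontr)
      assume "length q \<noteq> 1"
      then have "b \<in> set (butlast q)" using qb(2,5) by (cases q) auto
      then show False using av True by blast
    qed
    then have "w = b" using qb by (cases q) auto
    then have "d b m = 0" using m(2) True d_refl[of b] by force
    then have "m = b" using d_zero[OF b mV] by simp
    then show False using wm \<open>w = b\<close> by simp
  next
    case False
    have bm: "b \<noteq> m" "b \<noteq> w" using False m w by auto
    obtain \<gamma> where g: "geodesic E b m \<gamma>" using geo_ex[OF b mV] by blast
    have gb: "walk E \<gamma>" "hd \<gamma> = b" "last \<gamma> = m" "length \<gamma> = Suc (d b m)" "\<gamma> \<noteq> []"
      using geo_basic[OF g] by auto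
    have "hd \<gamma> \<noteq> last \<gamma>" using gb bm by simp
    then obtain gm where gm: "\<gamma> = b # gm @ [m]" using ends_split[OF gb(5)] gb(2,3) by auto
    have "hd q \<noteq> last q" using qb bm by simp
    then obtain qm where qm: "q = b # qm @ [w]" using ends_split[OF qb(5)] qb(2,3) by auto
    have wr: "walk E (rev \<gamma>)" using walkE_sym[OF gb(1)] .
    have W: "walk E (rev \<gamma> @ tl q)" using walk_append[OF wr qb(1)] gb qb by (simp add: last_rev)
    have Weq: "rev \<gamma> @ tl q = m # (rev gm @ [b] @ qm) @ [w]" using gm qm by simp
    have s1: "set gm \<inter> VS i = {}"
    proof (rule ccontr)
      assume "set gm \<inter> VS i \<noteq> {}"
      then obtain z where z: "z \<in> set gm" "z \<in> VS i" by blast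
      then obtain k where k: "k < length gm" "gm!k = z" by (metis in_set_conv_nth)
      have "\<gamma>!Suc k = z" using gm k by (simp add: nth_append)
      moreover have "Suc k < length \<gamma>" using gm k by simp
      ultimately have "d b z = Suc k" using geo_pos[OF g] by metis
      moreover have "d b m = Suc (length gm)" using gb(4) gm by simp
      ultimately have "d b z < d b m" using k by simp
      then show False using m(2) z(2) by force
    qed
    have s2: "set qm \<inter> VS i = {}" using av qm by (simp add: butlast_append)
    have "set (rev gm @ [b] @ qm) \<inter> VS i = {}" using s1 s2 False by auto
    then show False using NW[OF i, of m "rev gm @ [b] @ qm" w] W Weq m(1) w wm by simp
  qed
qed

lemma entry_eq:
  assumes i: "i \<in> I" and b: "b \<in> V" and m: "m \<in> VS i" "\<forall>w\<in>VS i. d b m \<le> d b w"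
  shows "entry E VS b i = m"
proof -
  have P: "\<forall>w\<in>VS i. w \<noteq> m \<longrightarrow> d b m < d b w"
  proof (intro ballI impI)
    fix w assume w: "w \<in> VS i" "w \<noteq> m"
    have wV: "w \<in> V" using VS_V[OF i] w by auto
    obtain q where q: "geodesic E b w q" using geo_ex[OF b wV] by blast
    have qb: "walk E q" "hd q = b" "last q = w" "length q = Suc (d b w)" "q \<noteq> []" using geo_basic[OF q] by auto
    have "\<exists>z\<in>set q. z \<in> VS i" using qb(3,5) w(1) by auto
    then obtain ys z zs where sp: "q = ys @ z # zs" "z \<in> VS i" "\<forall>y\<in>set ys. y \<notin> VS i"
      by (rule split_list_first_propE)
    have k: "length ys < length q" using sp by simp
    have qk: "q ! length ys = z" using sp by simp
    have tk: "take (Suc (length ys)) q = ys @ [z]" using sp by simp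
    have g2: "geodesic E b z (ys @ [z])" using geo_take[OF q k] qk tk by simp
    have "set (butlast (ys @ [z])) \<inter> VS i = {}" using sp(3) by auto
    then have zm: "z = m" using FM[OF i b m g2 sp(2)] by simp
    have "zs \<noteq> []" using sp qb(3) w(2) zm by auto
    then have "length ys < d b w" using qb(4) sp by (cases zs) auto
    moreover have "d b z = length ys" using geo_pos[OF q k] qk by simp
    ultimately show "d b m < d b w" using zm by simp
  qed
  show ?thesis unfolding entry_def
  proof (rule the_equality)
    show "m \<in> VS i \<and> (\<forall>w\<in>VS i. w \<noteq> m \<longrightarrow> gdist E b m < gdist E b w)" using m(1) P by blast
    fix v assume v: "v \<in> VS i \<and> (\<forall>w\<in>VS i. w \<noteq> v \<longrightarrow> gdist E b v < gdist E b w)"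
    show "v = m"
    proof (rule ccontr)
      assume "v \<noteq> m"
      then have "d b m < d b v" "d b v < d b m" using P v m(1) by auto
      then show False by simp
    qed
  qed
qed

lemma entry_props:
  assumes i: "i \<in> I" and b: "b \<in> V"
  shows "entry E VS b i \<in> VS i \<and> (\<forall>w\<in>VS i. d b (entry E VS b i) \<le> d b w)"
proof -
  obtain m where m: "m \<in> VS i" "\<forall>w\<in>VS i. d b m \<le> d b w" using min_ex[OF i] by blast
  show ?thesis using entry_eq[OF i b m] m by simp
qed

lemma entry_char:
  assumes i: "i \<in> I" and b: "b \<in> V" and q: "geodesic E b w q" and w: "w \<in> VS i"
    and av: "set (butlast q) \<inter> VS i = {}"
  shows "w = entry E VS b i"
proof -
  obtain m where m: "m \<in> VS i" "\<forall>w\<in>VS i. d b m \<le> d b w" using min_ex[OF i] by blast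
  show ?thesis using FM[OF i b m q w av] entry_eq[OF i b m] by simp
qed

lemma entry_first:
  assumes i: "i \<in> I" and b: "b \<in> V" and q: "geodesic E b y q" and k: "k < length q"
    and qk: "q!k \<in> VS i" and bef: "\<forall>k'<k. q!k' \<notin> VS i"
  shows "q!k = entry E VS b i"
proof -
  have g: "geodesic E b (q!k) (take (Suc k) q)" using geo_take[OF q k] .
  have "butlast (take (Suc k) q) = take k q" using k by (simp add: take_Suc_conv_app_nth)
  moreover have "set (take k q) \<inter> VS i = {}"
  proof (rule ccontr)
    assume "set (take k q) \<inter> VS i \<noteq> {}"
    then obtain z where "z \<in> set (take k q)" "z \<in> VS i" by blast
    then obtain k' where "k' < length (take k q)" "take k q ! k' = z" by (metis in_set_conv_nth)
    then show False using bef \<open>z \<in> VS i\<close> by auto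
  qed
  ultimately show ?thesis using entry_char[OF i b g qk] by simp
qed

lemma entry_geo_avoid:
  assumes i: "i \<in> I" and b: "b \<in> V" and g: "geodesic E b (entry E VS b i) \<gamma>"
  shows "set (butlast \<gamma>) \<inter> VS i = {}"
proof (rule ccontr)
  assume "set (butlast \<gamma>) \<inter> VS i \<noteq> {}"
  then obtain z where z: "z \<in> set (butlast \<gamma>)" "z \<in> VS i" by blast
  then obtain k where k: "k < length (butlast \<gamma>)" "butlast \<gamma> ! k = z" by (metis in_set_conv_nth)
  have gb: "length \<gamma> = Suc (d b (entry E VS b i))" using geo_basic[OF g] by simp
  have "\<gamma>!k = z" using k by (simp add: nth_butlast)
  then have "d b z = k" using geo_pos[OF g, of k] k by simp
  moreover have "k < d b (entry E VS b i)" using k gb by simp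
  ultimately show False using entry_props[OF i b] z(2) by force
qed

end



context TG begin

lemma PC_avoid:
  assumes i: "i \<in> I" and x: "x \<in> V" and y: "y \<in> V" and g: "geodesic E x y p"
    and av: "set p \<inter> VS i = {}"
  shows "entry E VS x i = entry E VS y i"
proof (rule ccontr)
  define c where "c = entry E VS x i"
  define c' where "c' = entry E VS y i"
  assume "entry E VS x i \<noteq> entry E VS y i"
  then have cc: "c \<noteq> c'" unfolding c_def c'_def by simp
  have cV: "c \<in> VS i" "c' \<in> VS i" using entry_props[OF i x] entry_props[OF i y] unfolding c_def c'_def by auto
  then have cV': "c \<in> V" "c' \<in> V" using VS_V[OF i] by auto
  obtain \<gamma> where ga: "geodesic E x c \<gamma>" using geo_ex[OF x cV'(1)] by blast
  obtain \<gamma>' where ga': "geodesic E y c' \<gamma>'" using geo_ex[OF y cV'(2)] by blast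
  have av1: "set (butlast \<gamma>) \<inter> VS i = {}" using entry_geo_avoid[OF i x] ga unfolding c_def by simp
  have av2: "set (butlast \<gamma>') \<inter> VS i = {}" using entry_geo_avoid[OF i y] ga' unfolding c'_def by simp
  have pb: "walk E p" "hd p = x" "last p = y" "p \<noteq> []" using geo_basic[OF g] by auto
  have gb: "walk E \<gamma>" "hd \<gamma> = x" "last \<gamma> = c" "\<gamma> \<noteq> []" using geo_basic[OF ga] by auto
  have gb': "walk E \<gamma>'" "hd \<gamma>' = y" "last \<gamma>' = c'" "\<gamma>' \<noteq> []" using geo_basic[OF ga'] by auto
  have xV: "x \<notin> VS i" "y \<notin> VS i" using av pb by (auto intro: hd_in_set last_in_set)
  have "hd \<gamma> \<noteq> last \<gamma>" using gb xV cV by auto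
  then obtain gm where gm: "\<gamma> = x # gm @ [c]" using ends_split[OF gb(4)] gb(2,3) by auto
  have "hd \<gamma>' \<noteq> last \<gamma>'" using gb' xV cV by auto
  then obtain gm' where gm': "\<gamma>' = y # gm' @ [c']" using ends_split[OF gb'(4)] gb'(2,3) by auto
  have w1: "walk E (p @ tl \<gamma>')" using walk_append[OF pb(1) gb'(1)] pb gb' by simp
  have w2: "walk E (rev \<gamma> @ tl (p @ tl \<gamma>'))"
    using walk_append[OF walkE_sym[OF gb(1)] w1] gb pb by (simp add: last_rev)
  obtain p' where p': "p = x # p'" using pb by (cases p) auto
  have Weq: "rev \<gamma> @ tl (p @ tl \<gamma>') = c # (rev gm @ [x] @ p' @ gm') @ [c']"
    using gm gm' p' by simp
  have "set (rev gm @ [x] @ p' @ gm') \<inter> VS i = {}"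
    using av1 av2 av gm gm' p' xV by (auto simp: butlast_append)
  then show False using NW[OF i, of c "rev gm @ [x] @ p' @ gm'" c'] w2 Weq cV cc by simp
qed

lemma PC:
  assumes i: "i \<in> I" and x: "x \<in> V" and y: "y \<in> V" and g: "geodesic E x y p"
  shows "card {t. Suc t < length p \<and> ES i (p!t) (p!Suc t)} = d (entry E VS x i) (entry E VS y i)"
proof (cases "set p \<inter> VS i = {}")
  case True
  have em: "{t. Suc t < length p \<and> ES i (p!t) (p!Suc t)} = {}"
  proof (rule ccontr)
    assume "{t. Suc t < length p \<and> ES i (p!t) (p!Suc t)} \<noteq> {}"
    then obtain t where "Suc t < length p" "ES i (p!t) (p!Suc t)" by blast
    then have "p!t \<in> VS i" "p!t \<in> set p" using ES_VS[OF i] by auto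
    then show False using True by blast
  qed
  show ?thesis unfolding em using PC_avoid[OF i x y g True] d_refl by simp
next
  case False
  define K where "K = {k. k < length p \<and> p!k \<in> VS i}"
  have Kf: "finite K" unfolding K_def by simp
  have Kne: "K \<noteq> {}" using False unfolding K_def by (auto simp: in_set_conv_nth)
  define f where "f = Min K"
  define l where "l = Max K"
  have fK: "f \<in> K" "l \<in> K" unfolding f_def l_def using Kf Kne by auto
  have fmin: "\<And>k. k \<in> K \<Longrightarrow> f \<le> k" unfolding f_def using Kf by simp
  have lmax: "\<And>k. k \<in> K \<Longrightarrow> k \<le> l" unfolding l_def using Kf by simp
  have fl: "f \<le> l" using fmin fK by simp
  have pb: "walk E p" "hd p = x" "last p = y" "length p = Suc (d x y)" "p \<noteq> []" using geo_basic[OF g] by auto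
  have dp: "distinct p" using geo_distinct[OF g] .
  have flen: "f < length p" "l < length p" using fK unfolding K_def by auto
  have ef: "p!f = entry E VS x i"
  proof (rule entry_first[OF i x g flen(1)])
    show "p!f \<in> VS i" using fK unfolding K_def by simp
    show "\<forall>k'<f. p!k' \<notin> VS i"
    proof (intro allI impI)
      fix k' assume k': "k' < f"
      show "p!k' \<notin> VS i"
      proof
        assume "p!k' \<in> VS i"
        then have "k' \<in> K" unfolding K_def using k' flen by simp
        then show False using fmin k' by fastforce
      qed
    qed
  qed
  have el: "p!l = entry E VS y i"
  proof -
    have gr: "geodesic E y x (rev p)" using geo_rev[OF g] .
    define k where "k = length p - 1 - l"
    have k: "k < length (rev p)" unfolding k_def using flen by simp
    have rk: "rev p ! k = p!l" unfolding k_def using flen by (simp add: rev_nth)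
    have "rev p ! k = entry E VS y i"
    proof (rule entry_first[OF i y gr k])
      show "rev p ! k \<in> VS i" using rk fK unfolding K_def by simp
      show "\<forall>k'<k. rev p ! k' \<notin> VS i"
      proof (intro allI impI)
        fix k' assume k': "k' < k"
        have "rev p ! k' = p ! (length p - Suc k')" using k' k by (simp add: rev_nth)
        moreover have "l < length p - Suc k'" using k' unfolding k_def using flen by simp
        moreover have "length p - Suc k' < length p" using flen by simp
        ultimately show "rev p ! k' \<notin> VS i" using lmax[of "length p - Suc k'"] unfolding K_def by fastforce
      qed
    qed
    then show ?thesis using rk by simp
  qed
  have seteq: "{t. Suc t < length p \<and> ES i (p!t) (p!Suc t)} = {f..<l}"
  proof (intro set_eqI iffI)
    fix t assume "t \<in> {t. Suc t < length p \<and> ES i (p!t) (p!Suc t)}"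
    then have t: "Suc t < length p" "ES i (p!t) (p!Suc t)" by auto
    then have "t \<in> K" "Suc t \<in> K" using ES_VS[OF i t(2)] unfolding K_def by auto
    then show "t \<in> {f..<l}" using fmin lmax by fastforce
  next
    fix t assume t: "t \<in> {f..<l}"
    define s where "s = drop f (take (Suc l) p)"
    have ws: "walk E s" unfolding s_def using walk_drop[OF walk_take[OF pb(1)]] flen fl by simp
    have ds: "distinct s" unfolding s_def using dp by simp
    have ls: "length s = Suc l - f" unfolding s_def using flen by simp
    have sn: "\<And>j. j < length s \<Longrightarrow> s!j = p!(f + j)" unfolding s_def using flen fl by simp
    have hs: "hd s = p!f" using sn[of 0] ls fl ws by (simp add: hd_conv_nth walk_def)
    have lsn: "last s = p!l" using sn[of "length s - 1"] ls fl ws by (simp add: last_conv_nth walk_def)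
    have "walk_in (ES i) s" using Kwalk[OF i ws ds] hs lsn fK unfolding K_def by simp
    then have "ES i (s!(t-f)) (s!Suc (t-f))" using t ls unfolding walk_in_def by auto
    moreover have "s!(t-f) = p!t" "s!Suc (t-f) = p!Suc t" using sn t ls by auto
    moreover have "Suc t < length p" using t flen by simp
    ultimately show "t \<in> {t. Suc t < length p \<and> ES i (p!t) (p!Suc t)}" by simp
  qed
  have "d (p!f) (p!l) = l - f"
  proof -
    have gd: "geodesic E (p!f) y (drop f p)" using geo_drop[OF g flen(1)] .
    have "(drop f p)!(l - f) = p!l" using fl flen by simp
    moreover have "l - f < length (drop f p)" using flen fl by simp
    ultimately show ?thesis using geo_pos[OF gd] by metis
  qed
  then show ?thesis using seteq ef el by simp
qed


lemma tid_sym: "tid V E I VS e a b \<Longrightarrow> tid V E I VS e b a"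
  unfolding tid_def by metis

lemma cls_self: "z \<in> tclass V E I VS e z"
  unfolding tclass_def by simp

lemma TW:
  shows "walk E p \<Longrightarrow> set p \<subseteq> V \<Longrightarrow> \<exists>W. walk (tadj V E I VS e) W \<and> hd W = tclass V E I VS e (hd p)
     \<and> last W = tclass V E I VS e (last p) \<and> length W \<le> length p"
proof (induction p)
  case Nil then show ?case by (simp add: walk_def)
next
  case (Cons u p)
  show ?case
  proof (cases "p = []")
    case True then show ?thesis by (intro exI[of _ "[tclass V E I VS e u]"]) simp
  next
    case False
    have wp: "walk E p" using Cons.prems(1) walk_appD2[of E "[u]" p] False by simp
    obtain W where W: "walk (tadj V E I VS e) W" "hd W = tclass V E I VS e (hd p)"
      "last W = tclass V E I VS e (last p)" "length W \<le> length p"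
      using Cons.IH[OF wp] Cons.prems(2) by auto
    have Wne: "W \<noteq> []" using W(1) by (simp add: walk_def)
    have euv: "E u (hd p)" using Cons.prems(1) False by (cases p) auto
    show ?thesis
    proof (cases "tclass V E I VS e u = tclass V E I VS e (hd p)")
      case True
      then show ?thesis using W False by (intro exI[of _ W]) auto
    next
      case neq: False
      have ta: "tadj V E I VS e (tclass V E I VS e u) (hd W)"
        unfolding tadj_def W(2)
      proof (intro conjI)
        show "tclass V E I VS e u \<in> tclass V E I VS e ` V" using Cons.prems(2) by simp
        have "hd p \<in> V" using Cons.prems(2) hd_in_set[OF False] by auto
        then show "tclass V E I VS e (hd p) \<in> tclass V E I VS e ` V" by simp
        show "tclass V E I VS e u \<noteq> tclass V E I VS e (hd p)" using neq .
        show "\<exists>ua\<in>tclass V E I VS e u. \<exists>v\<in>tclass V E I VS e (hd p). E ua v"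
          using cls_self euv by blast
      qed
      have "walk (tadj V E I VS e) (tclass V E I VS e u # W)"
        using ta W(1) Wne by (cases W) auto
      then show ?thesis using W False Wne
        by (intro exI[of _ "tclass V E I VS e u # W"]) auto
    qed
  qed
qed

definition side where
  "side p t z \<longleftrightarrow> (\<exists>W. walk (avoid (p!t) (p!Suc t)) W \<and> hd W = p!Suc t \<and> last W = z)"
definition BRs where
  "BRs p = {t. Suc t < length p \<and> (\<forall>i\<in>I. \<not> ES i (p!t) (p!Suc t))}"
definition phi where
  "phi p z = card {t\<in>BRs p. side p t z}"

lemma side_step: "side p t a \<Longrightarrow> avoid (p!t) (p!Suc t) a b \<Longrightarrow> side p t b"
proof -
  assume s: "side p t a" and av: "avoid (p!t) (p!Suc t) a b"
  obtain W where W: "walk (avoid (p!t) (p!Suc t)) W" "hd W = p!Suc t" "last W = a"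
    using s unfolding side_def by blast
  have "walk (avoid (p!t) (p!Suc t)) (W @ [b])" using walk_append2[OF W(1), of "[b]"] W av by simp
  moreover have "hd (W @ [b]) = p!Suc t" using W by (cases W) (auto simp: walk_def)
  ultimately show "side p t b" unfolding side_def by (intro exI[of _ "W @ [b]"]) simp
qed

lemma side_walk: "side p t a \<Longrightarrow> walk (avoid (p!t) (p!Suc t)) W \<Longrightarrow> hd W = a \<Longrightarrow> side p t (last W)"
proof -
  assume s: "side p t a" and w: "walk (avoid (p!t) (p!Suc t)) W" and h: "hd W = a"
  obtain U where U: "walk (avoid (p!t) (p!Suc t)) U" "hd U = p!Suc t" "last U = a"
    using s unfolding side_def by blast
  have Une: "U \<noteq> []" "W \<noteq> []" using U w by (auto simp: walk_def)
  have "walk (avoid (p!t) (p!Suc t)) (U @ tl W)" using walk_append[OF U(1) w] U h by simp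
  moreover have "hd (U @ tl W) = p!Suc t" using U Une by simp
  moreover have "last (U @ tl W) = last W" using last_app_tl[OF Une] U h by simp
  ultimately show ?thesis unfolding side_def by blast
qed

lemma BRs_fin: "finite (BRs p)"
  unfolding BRs_def by (rule finite_subset[of _ "{..<length p}"]) auto

lemma phi_edge:
  assumes dp: "distinct p" and e: "E u v"
  shows "phi p u \<le> phi p v + 1"
proof -
  define A where "A = {t\<in>BRs p. side p t u}"
  define B where "B = {t\<in>BRs p. side p t v}"
  define D where "D = {t\<in>BRs p. (u = p!t \<and> v = p!Suc t) \<or> (u = p!Suc t \<and> v = p!t)}"
  have fin: "finite A" "finite B" "finite D" unfolding A_def B_def D_def using BRs_fin by auto
  have sub: "A \<subseteq> B \<union> D"
  proof
    fix t assume t: "t \<in> A"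
    show "t \<in> B \<union> D"
    proof (cases "t \<in> D")
      case False
      then have "avoid (p!t) (p!Suc t) u v" unfolding avoid_def D_def using e t A_def by auto
      then have "side p t v" using side_step t unfolding A_def by blast
      then show ?thesis using t unfolding A_def B_def by simp
    qed simp
  qed
  have "card D \<le> Suc 0"
  proof (subst card_le_Suc0_iff_eq[OF fin(3)], intro ballI)
    fix t1 t2 assume t: "t1 \<in> D" "t2 \<in> D"
    then have l: "Suc t1 < length p" "Suc t2 < length p" unfolding D_def BRs_def by auto
    have "p!t1 = p!t2 \<and> p!Suc t1 = p!Suc t2 \<or> p!t1 = p!Suc t2 \<and> p!Suc t1 = p!t2"
      using t unfolding D_def by auto
    then show "t1 = t2"
    proof
      assume "p!t1 = p!t2 \<and> p!Suc t1 = p!Suc t2"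
      then show ?thesis using nth_eq_iff_index_eq[OF dp] l by auto
    next
      assume a: "p!t1 = p!Suc t2 \<and> p!Suc t1 = p!t2"
      then have "t1 = Suc t2" "Suc t1 = t2" using nth_eq_iff_index_eq[OF dp] l by auto
      then show ?thesis by simp
    qed
  qed
  moreover have "card A \<le> card B + card D"
    using card_mono[OF _ sub] fin card_Un_le[of B D] by (meson finite_UnI le_trans)
  ultimately show ?thesis unfolding phi_def A_def[symmetric] B_def[symmetric] by simp
qed

lemma phi_tid:
  assumes "tid V E I VS e a b"
  shows "phi p a = phi p b"
proof -
  have key: "\<And>a b t. tid V E I VS e a b \<Longrightarrow> t \<in> BRs p \<Longrightarrow> side p t a \<Longrightarrow> side p t b"
  proof -
    fix a b t assume ab: "tid V E I VS e a b" and t: "t \<in> BRs p" and s: "side p t a"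
    obtain i where i: "i \<in> I" "a \<in> VS i" "b \<in> VS i" using ab unfolding tid_def by blast
    obtain W where W: "walk (ES i) W" "hd W = a" "last W = b" using VS_conn[OF i] by blast
    have nb: "\<not> ES i (p!t) (p!Suc t)" using t i unfolding BRs_def by auto
    have "walk (avoid (p!t) (p!Suc t)) W"
    proof (rule walk_mono[OF W(1)])
      fix u v assume uv: "ES i u v"
      have "\<not> (u = p!Suc t \<and> v = p!t)" using nb uv ES_sym[OF i(1)] by blast
      then show "avoid (p!t) (p!Suc t) u v" unfolding avoid_def using uv nb ES_E[OF i(1)] by blast
    qed
    then have "side p t (last W)" using side_walk[OF s] W(2) by blast
    then show "side p t b" using W(3) by simp
  qed
  have "{t\<in>BRs p. side p t a} = {t\<in>BRs p. side p t b}"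
  proof (intro set_eqI iffI)
    fix t assume "t \<in> {t\<in>BRs p. side p t a}"
    then show "t \<in> {t\<in>BRs p. side p t b}" using key[OF assms, of t] by simp
  next
    fix t assume "t \<in> {t\<in>BRs p. side p t b}"
    then show "t \<in> {t\<in>BRs p. side p t a}" using key[OF tid_sym[OF assms], of t] by simp
  qed
  then show ?thesis unfolding phi_def by simp
qed

lemma phi_rt: "(tid V E I VS e)\<^sup>*\<^sup>* a b \<Longrightarrow> phi p a = phi p b"
proof (induction rule: rtranclp_induct)
  case (step y z)
  then show ?case using phi_tid[of e y z p] by simp
qed simp

lemma phi_class:
  assumes "C \<in> tclass V E I VS e ` V" "a \<in> C" "b \<in> C"
  shows "phi p a = phi p b"
proof -
  obtain z where z: "C = tclass V E I VS e z" using assms(1) by blast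
  have "(tid V E I VS e)\<^sup>*\<^sup>* z a" "(tid V E I VS e)\<^sup>*\<^sup>* z b" using assms(2,3) z unfolding tclass_def by auto
  then have "phi p z = phi p a" "phi p z = phi p b" using phi_rt by blast+
  then show ?thesis by simp
qed

lemma phi_walk:
  assumes dp: "distinct p"
  shows "walk (tadj V E I VS e) W \<Longrightarrow> hd W \<in> tclass V E I VS e ` V \<Longrightarrow> u \<in> hd W \<Longrightarrow> v \<in> last W
    \<Longrightarrow> phi p v \<le> phi p u + (length W - 1)"
proof (induction W arbitrary: u)
  case Nil then show ?case by (simp add: walk_def)
next
  case (Cons C W)
  show ?case
  proof (cases "W = []")
    case True
    then show ?thesis using Cons.prems phi_class[of C e u v p] by simp
  next
    case False
    have ta: "tadj V E I VS e C (hd W)" using Cons.prems(1) False by (cases W) auto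
    have wW: "walk (tadj V E I VS e) W" using Cons.prems(1) walk_appD2[of _ "[C]" W] False by simp
    obtain u' v' where uv: "u' \<in> C" "v' \<in> hd W" "E u' v'" using ta unfolding tadj_def by blast
    have hW: "hd W \<in> tclass V E I VS e ` V" using ta unfolding tadj_def by blast
    have "phi p v \<le> phi p v' + (length W - 1)" using Cons.IH[OF wW hW uv(2)] Cons.prems(4) False by simp
    moreover have "phi p v' \<le> phi p u' + 1" using phi_edge[OF dp E_sym[OF uv(3)]] .
    moreover have "phi p u' = phi p u" using phi_class[of C e u' u p] Cons.prems(2,3) uv(1) by simp
    ultimately show ?thesis using False by (cases W) auto
  qed
qed

lemma avoid_idx:
  assumes w: "walk E p" and dp: "distinct p" and t: "Suc t < length p" and k: "Suc k < length p" "k \<noteq> t"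
  shows "avoid (p!t) (p!Suc t) (p!k) (p!Suc k)"
  unfolding avoid_def
proof (intro conjI)
  show "E (p!k) (p!Suc k)" using walk_nth[OF w k(1)] .
  show "\<not> (p!k = p!t \<and> p!Suc k = p!Suc t)" using nth_eq_iff_index_eq[OF dp] t k by auto
  show "\<not> (p!k = p!Suc t \<and> p!Suc k = p!t)"
  proof
    assume "p!k = p!Suc t \<and> p!Suc k = p!t"
    then have "k = Suc t" "Suc k = t" using nth_eq_iff_index_eq[OF dp] t k by auto
    then show False by simp
  qed
qed

lemma phi_ends:
  assumes x: "x \<in> V" and g: "geodesic E x y p"
  shows "phi p x = 0" "phi p y = card (BRs p)"
proof -
  have pb: "walk E p" "hd p = x" "last p = y" "p \<noteq> []" using geo_basic[OF g] by auto
  have dp: "distinct p" using geo_distinct[OF g] .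
  have emp: "{t\<in>BRs p. side p t x} = {}"
  proof (rule ccontr)
    assume "{t\<in>BRs p. side p t x} \<noteq> {}"
    then obtain t where t: "t \<in> BRs p" "side p t x" by blast
    have tl: "Suc t < length p" using t unfolding BRs_def by simp
    define T where "T = take (Suc t) p"
    have wT: "walk (avoid (p!t) (p!Suc t)) T" unfolding walk_def T_def
    proof (intro conjI allI impI)
      show "take (Suc t) p \<noteq> []" using pb by simp
      fix k assume "Suc k < length (take (Suc t) p)"
      then have k: "Suc k < length p" "k < t" by auto
      then show "avoid (p!t) (p!Suc t) (take (Suc t) p ! k) (take (Suc t) p ! Suc k)"
        using avoid_idx[OF pb(1) dp tl k(1)] by simp
    qed
    have "hd T = x" unfolding T_def using pb by (simp add: hd_take)
    then have "side p t (last T)" using side_walk[OF t(2) wT] by simp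
    moreover have "last T = p!t" unfolding T_def using last_take_Suc[of t p] tl by simp
    ultimately have "side p t (p!t)" by simp
    then obtain W where W: "walk (avoid (p!t) (p!Suc t)) W" "hd W = p!Suc t" "last W = p!t"
      unfolding side_def by blast
    have e: "E (p!t) (p!Suc t)" using walk_nth[OF pb(1) tl] .
    have nb: "\<forall>i\<in>I. \<not> ES i (p!t) (p!Suc t)" using t unfolding BRs_def by simp
    show False using BL[OF e nb W] .
  qed
  show "phi p x = 0" unfolding phi_def emp by simp
  have full: "{t\<in>BRs p. side p t y} = BRs p"
  proof (intro set_eqI iffI)
    fix t assume t: "t \<in> BRs p"
    have tl: "Suc t < length p" using t unfolding BRs_def by simp
    define T where "T = drop (Suc t) p"
    have wT: "walk (avoid (p!t) (p!Suc t)) T" unfolding walk_def T_def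
    proof (intro conjI allI impI)
      show "drop (Suc t) p \<noteq> []" using tl by simp
      fix k assume "Suc k < length (drop (Suc t) p)"
      then have k: "Suc (Suc t + k) < length p" "Suc t + k \<noteq> t" by auto
      then show "avoid (p!t) (p!Suc t) (drop (Suc t) p ! k) (drop (Suc t) p ! Suc k)"
        using avoid_idx[OF pb(1) dp tl k(1,2)] by simp
    qed
    have "hd T = p!Suc t" unfolding T_def using tl by (simp add: hd_drop_conv_nth)
    moreover have "last T = y" unfolding T_def using tl pb by simp
    ultimately have "side p t y" unfolding side_def using wT by blast
    then show "t \<in> {t\<in>BRs p. side p t y}" using t by simp
  qed simp
  show "phi p y = card (BRs p)" unfolding phi_def full by simp
qed


lemma sigmaT_bounds:
  assumes x: "x \<in> V" and y: "y \<in> V" and g: "geodesic E x y p"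
  shows "card (BRs p) \<le> gdist (tadj V E I VS e) (tclass V E I VS e x) (tclass V E I VS e y)
     \<and> gdist (tadj V E I VS e) (tclass V E I VS e x) (tclass V E I VS e y) \<le> d x y"
proof -
  have pb: "walk E p" "hd p = x" "last p = y" "length p = Suc (d x y)" using geo_basic[OF g] by auto
  have sV: "set p \<subseteq> V" using geo_V[OF g x] .
  obtain W where W: "walk (tadj V E I VS e) W" "hd W = tclass V E I VS e x"
     "last W = tclass V E I VS e y" "length W \<le> length p"
    using TW[OF pb(1) sV, of e] pb by auto
  have le: "gdist (tadj V E I VS e) (tclass V E I VS e x) (tclass V E I VS e y) \<le> d x y"
    using gdist_le[OF W(1-3)] W(4) pb(4) by simp
  obtain W0 where W0: "walk (tadj V E I VS e) W0" "hd W0 = tclass V E I VS e x"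
     "last W0 = tclass V E I VS e y"
     "length W0 = Suc (gdist (tadj V E I VS e) (tclass V E I VS e x) (tclass V E I VS e y))"
    using gdist_ex[OF W(1-3)] by blast
  have "phi p y \<le> phi p x + (length W0 - 1)"
    using phi_walk[OF geo_distinct[OF g] W0(1)] W0(2,3) x cls_self by simp
  then show ?thesis using phi_ends[OF x g] W0(4) le by simp
qed

lemma count:
  assumes x: "x \<in> V" and y: "y \<in> V" and g: "geodesic E x y p"
  shows "finite {i\<in>I. entry E VS x i \<noteq> entry E VS y i}
    \<and> d x y = (\<Sum>i\<in>{i\<in>I. entry E VS x i \<noteq> entry E VS y i}. d (entry E VS x i) (entry E VS y i)) + card (BRs p)"
proof -
  define S where "S = {i\<in>I. entry E VS x i \<noteq> entry E VS y i}"
  define P where "P = (\<lambda>i. {t. Suc t < length p \<and> ES i (p!t) (p!Suc t)})"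
  define PE where "PE = {t. Suc t < length p \<and> (\<exists>i\<in>I. ES i (p!t) (p!Suc t))}"
  have pb: "length p = Suc (d x y)" using geo_basic[OF g] by auto
  have Pfin: "\<And>i. finite (P i)" unfolding P_def by (rule finite_subset[of _ "{..<length p}"]) auto
  have cardP: "\<And>i. i \<in> I \<Longrightarrow> card (P i) = d (entry E VS x i) (entry E VS y i)"
    unfolding P_def using PC[OF _ x y g] by simp
  have eV: "\<And>i. i \<in> I \<Longrightarrow> entry E VS x i \<in> V \<and> entry E VS y i \<in> V"
    using entry_props[OF _ x] entry_props[OF _ y] VS_V by blast
  have Sne: "\<And>i. i \<in> S \<Longrightarrow> P i \<noteq> {}"
  proof -
    fix i assume i: "i \<in> S"
    then have "d (entry E VS x i) (entry E VS y i) \<noteq> 0" using d_zero eV unfolding S_def by blast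
    then show "P i \<noteq> {}" using cardP i unfolding S_def by force
  qed
  define pc where "pc = (\<lambda>t. SOME i. i \<in> I \<and> ES i (p!t) (p!Suc t))"
  have Ssub: "S \<subseteq> pc ` {..<length p}"
  proof
    fix i assume i: "i \<in> S"
    then obtain t where t: "t \<in> P i" using Sne by blast
    then have t': "Suc t < length p" "ES i (p!t) (p!Suc t)" "i \<in> I" using i unfolding P_def S_def by auto
    then have "pc t \<in> I \<and> ES (pc t) (p!t) (p!Suc t)" unfolding pc_def
      using someI[of "\<lambda>i. i \<in> I \<and> ES i (p!t) (p!Suc t)" i] by blast
    then have "pc t = i" using ES_unique t' by blast
    then show "i \<in> pc ` {..<length p}" using t' by force
  qed
  have Sfin: "finite S" using finite_subset[OF Ssub] by simp
  have PEeq: "PE = \<Union> (P ` S)"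
  proof (intro set_eqI iffI)
    fix t assume "t \<in> PE"
    then obtain i where i: "i \<in> I" "Suc t < length p" "ES i (p!t) (p!Suc t)" unfolding PE_def by blast
    then have "t \<in> P i" unfolding P_def by simp
    then have "card (P i) \<noteq> 0" using Pfin by auto
    then have "entry E VS x i \<noteq> entry E VS y i" using cardP[OF i(1)] d_refl by auto
    then show "t \<in> \<Union> (P ` S)" using \<open>t \<in> P i\<close> i unfolding S_def by blast
  next
    fix t assume "t \<in> \<Union> (P ` S)"
    then show "t \<in> PE" unfolding PE_def P_def S_def by blast
  qed
  have disj: "\<forall>i\<in>S. \<forall>j\<in>S. i \<noteq> j \<longrightarrow> P i \<inter> P j = {}"
    using ES_unique unfolding P_def S_def by blast
  have cPE: "card PE = (\<Sum>i\<in>S. d (entry E VS x i) (entry E VS y i))"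
  proof -
    have "card PE = (\<Sum>i\<in>S. card (P i))" unfolding PEeq using card_UN_disjoint[OF Sfin _ disj] Pfin by simp
    also have "\<dots> = (\<Sum>i\<in>S. d (entry E VS x i) (entry E VS y i))" using cardP unfolding S_def by simp
    finally show ?thesis .
  qed
  have un: "{..<d x y} = PE \<union> BRs p" unfolding PE_def BRs_def using pb by auto
  have di: "PE \<inter> BRs p = {}" unfolding PE_def BRs_def by auto
  have "d x y = card PE + card (BRs p)"
  proof -
    have "card {..<d x y} = card (PE \<union> BRs p)" using un by simp
    also have "\<dots> = card PE + card (BRs p)"
      using card_Un_disjoint[OF _ _ di] un by (metis finite_Un finite_lessThan)
    finally show ?thesis by simp
  qed
  then show ?thesis using Sfin cPE unfolding S_def by simp
qed

end



lemma dmono: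
  fixes a b :: "nat \<Rightarrow> nat"
  assumes ab: "\<forall>j<L. a j \<le> b j" and ba: "\<forall>j. Suc j < L \<longrightarrow> b j \<le> a (Suc j)"
  shows "j < j' \<Longrightarrow> j' < L \<Longrightarrow> b j \<le> a j'"
proof (induction j')
  case 0 then show ?case by simp
next
  case (Suc j')
  show ?case
  proof (cases "j = j'")
    case True then show ?thesis using ba Suc.prems by simp
  next
    case False
    then have "b j \<le> a j'" using Suc by simp
    also have "a j' \<le> b j'" using ab Suc.prems by simp
    also have "b j' \<le> a (Suc j')" using ba Suc.prems by simp
    finally show ?thesis .
  qed
qed

lemma dmono2:
  fixes a b :: "nat \<Rightarrow> nat"
  assumes ab: "\<forall>j<L. a j \<le> b j" and ba: "\<forall>j. Suc j < L \<longrightarrow> b j \<le> a (Suc j)"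
  shows "j \<le> j' \<Longrightarrow> j' < L \<Longrightarrow> b j \<le> b j'"
proof -
  assume j: "j \<le> j'" "j' < L"
  show "b j \<le> b j'"
  proof (cases "j = j'")
    case False
    then have "b j \<le> a j'" using dmono[OF ab ba, of j j'] j by simp
    then show ?thesis using ab j by fastforce
  qed simp
qed

lemma dcover:
  fixes a b :: "nat \<Rightarrow> nat"
  assumes ab: "\<forall>j<L. a j \<le> b j" and ba: "\<forall>j. Suc j < L \<longrightarrow> b j \<le> a (Suc j) \<and> a (Suc j) \<le> Suc (b j)"
    and a0: "a 0 = 0" and bL: "b (L - 1) = n" and L: "0 < L" and t: "t < n"
  shows "(\<exists>j<L. a j \<le> t \<and> t < b j) \<or> (\<exists>j. Suc j < L \<and> b j = t \<and> a (Suc j) = Suc t)"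
proof -
  define J where "J = {j. j < L \<and> a j \<le> t}"
  have Jf: "finite J" unfolding J_def by simp
  have Jne: "0 \<in> J" unfolding J_def using a0 L by simp
  define j where "j = Max J"
  have jJ: "j \<in> J" unfolding j_def using Jf Jne Max_in by blast
  have jmax: "\<And>k. k \<in> J \<Longrightarrow> k \<le> j" unfolding j_def using Jf by simp
  show ?thesis
  proof (cases "t < b j")
    case True then show ?thesis using jJ unfolding J_def by blast
  next
    case False
    have "Suc j < L"
    proof (rule ccontr)
      assume "\<not> Suc j < L"
      moreover have "j < L" using jJ unfolding J_def by simp
      ultimately have "j = L - 1" by linarith
      then show False using False bL t by simp
    qed
    moreover have "\<not> a (Suc j) \<le> t" using jmax[of "Suc j"] \<open>Suc j < L\<close> unfolding J_def by fastforce
    ultimately show ?thesis using ba False by (intro disjI2 exI[of _ j]) force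
  qed
qed

context TG begin

lemma seg:
  assumes i: "i \<in> I" and w: "walk E p" and dp: "distinct p" and km: "k \<le> m" "m < length p"
    and pk: "p!k \<in> VS i" and pm: "p!m \<in> VS i"
  shows "(\<forall>t. k \<le> t \<and> t \<le> m \<longrightarrow> p!t \<in> VS i) \<and> (\<forall>t. k \<le> t \<and> t < m \<longrightarrow> ES i (p!t) (p!Suc t))"
proof -
  define s where "s = drop k (take (Suc m) p)"
  have ws: "walk E s" unfolding s_def using walk_drop[OF walk_take[OF w]] km by simp
  have ds: "distinct s" unfolding s_def using dp by simp
  have ls: "length s = Suc m - k" unfolding s_def using km by simp
  have sn: "\<And>j. j < length s \<Longrightarrow> s!j = p!(k + j)" unfolding s_def using km by simp
  have hs: "hd s = p!k" using sn[of 0] ls km ws by (simp add: hd_conv_nth walk_def)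
  have lsn: "last s = p!m" using sn[of "length s - 1"] ls km ws by (simp add: last_conv_nth walk_def)
  have wi: "walk_in (ES i) s" using Kwalk[OF i ws ds] hs lsn pk pm by simp
  have ss: "set s \<subseteq> VS i" using Kpath[OF i ws ds] hs lsn pk pm by simp
  show ?thesis
  proof (intro conjI allI impI)
    fix t assume t: "k \<le> t \<and> t \<le> m"
    then have "s!(t-k) = p!t" "t - k < length s" using sn ls by auto
    then have "s!(t-k) \<in> set s" using nth_mem[of "t-k" s] by blast
    then show "p!t \<in> VS i" using ss \<open>s!(t-k) = p!t\<close> by auto
  next
    fix t assume t: "k \<le> t \<and> t < m"
    then have "ES i (s!(t-k)) (s!Suc (t-k))" using wi ls unfolding walk_in_def by auto
    moreover have "s!(t-k) = p!t" "s!Suc (t-k) = p!Suc t" using sn t ls by auto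
    ultimately show "ES i (p!t) (p!Suc t)" by simp
  qed
qed

lemma dec_use:
  assumes "decomp V E I VS ES e x ixs xs" "geodesic E e x p"
  shows "\<exists>a b :: nat \<Rightarrow> nat. a 0 = 0 \<and> b (length ixs - 1) = length p - 1 \<and>
          (\<forall>j < length ixs. a j \<le> b j \<and> p ! (a j) = entry E VS e (ixs!j) \<and> p ! (b j) = xs!j \<and>
             (\<forall>m. a j \<le> m \<and> m \<le> b j \<longrightarrow> p!m \<in> VS (ixs!j)) \<and>
             (\<forall>m. a j \<le> m \<and> m < b j \<longrightarrow> ES (ixs!j) (p!m) (p!Suc m))) \<and>
          (\<forall>j. Suc j < length ixs \<longrightarrow> b j \<le> a (Suc j) \<and> a (Suc j) \<le> Suc (b j) \<and>
             (a (Suc j) = Suc (b j) \<longrightarrow> (\<forall>i\<in>I. \<not> ES i (p ! b j) (p ! a (Suc j)))))"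
  using assms unfolding decomp_def by blast

lemma dec_basic:
  assumes "decomp V E I VS ES e x ixs xs"
  shows "ixs \<noteq> [] \<and> length xs = length ixs \<and> distinct ixs \<and> set ixs \<subseteq> I \<and> last xs = x"
  using assms unfolding decomp_def by blast


definition segs where
  "segs e p ixs xs (a :: nat \<Rightarrow> nat) b \<longleftrightarrow> a 0 = 0 \<and> b (length ixs - 1) = length p - 1 \<and>
          (\<forall>j < length ixs. a j \<le> b j \<and> p ! (a j) = entry E VS e (ixs!j) \<and> p ! (b j) = xs!j \<and>
             (\<forall>m. a j \<le> m \<and> m \<le> b j \<longrightarrow> p!m \<in> VS (ixs!j)) \<and>
             (\<forall>m. a j \<le> m \<and> m < b j \<longrightarrow> ES (ixs!j) (p!m) (p!Suc m))) \<and>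
          (\<forall>j. Suc j < length ixs \<longrightarrow> b j \<le> a (Suc j) \<and> a (Suc j) \<le> Suc (b j) \<and>
             (a (Suc j) = Suc (b j) \<longrightarrow> (\<forall>i\<in>I. \<not> ES i (p ! b j) (p ! a (Suc j)))))"

lemma decomp_segs: "decomp V E I VS ES e x ixs xs \<longleftrightarrow>
   (ixs \<noteq> [] \<and> length xs = length ixs \<and> distinct ixs \<and> set ixs \<subseteq> I \<and> last xs = x \<and>
    (\<forall>p. geodesic E e x p \<longrightarrow> (\<exists>a b. segs e p ixs xs a b)))"
  unfolding decomp_def segs_def by blast

lemma segs_bj:
  assumes sg: "segs e p ixs xs a b" and ne: "ixs \<noteq> []" and j: "j < length ixs"
  shows "b j \<le> length p - 1" "a j \<le> b j"
proof -
  have ab: "\<forall>j<length ixs. a j \<le> b j" and ba: "\<forall>j. Suc j < length ixs \<longrightarrow> b j \<le> a (Suc j)"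
    using sg unfolding segs_def by auto
  have "b j \<le> b (length ixs - 1)" using dmono2[OF ab ba, of j "length ixs - 1"] j by simp
  then show "b j \<le> length p - 1" using sg unfolding segs_def by simp
  show "a j \<le> b j" using ab j by simp
qed

lemma CovP:
  assumes sg: "segs e p ixs xs a b" and ne: "ixs \<noteq> []" and sI: "set ixs \<subseteq> I"
    and i: "i \<in> I" and t: "Suc t < length p" and es: "ES i (p!t) (p!Suc t)"
  shows "\<exists>j<length ixs. a j \<le> t \<and> t < b j \<and> ixs!j = i"
proof -
  have ab: "\<forall>j<length ixs. a j \<le> b j"
    and ba: "\<forall>j. Suc j < length ixs \<longrightarrow> b j \<le> a (Suc j) \<and> a (Suc j) \<le> Suc (b j)"
    and a0: "a 0 = 0" and bL: "b (length ixs - 1) = length p - 1"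
    using sg unfolding segs_def by auto
  have L: "0 < length ixs" using ne by simp
  have t': "t < length p - 1" using t by simp
  from dcover[OF ab ba a0 bL L t']
  show ?thesis
  proof
    assume "\<exists>j<length ixs. a j \<le> t \<and> t < b j"
    then obtain j where j: "j < length ixs" "a j \<le> t" "t < b j" by blast
    then have "ES (ixs!j) (p!t) (p!Suc t)" using sg unfolding segs_def by auto
    moreover have "ixs!j \<in> I" using sI j by auto
    ultimately have "ixs!j = i" using ES_unique[OF _ i _ es] by blast
    then show ?thesis using j by blast
  next
    assume "\<exists>j. Suc j < length ixs \<and> b j = t \<and> a (Suc j) = Suc t"
    then obtain j where j: "Suc j < length ixs" "b j = t" "a (Suc j) = Suc t" by blast
    then have "\<forall>i\<in>I. \<not> ES i (p ! b j) (p ! a (Suc j))" using sg unfolding segs_def by auto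
    then show ?thesis using j i es by auto
  qed
qed

lemma XP:
  assumes e: "e \<in> V" and x: "x \<in> V" and dec: "decomp V E I VS ES e x ixs xs" and i: "i \<in> I"
  shows "(if i \<in> set ixs then xs ! (THE j. j < length ixs \<and> ixs!j = i) else entry E VS e i)
         = entry E VS x i"
proof -
  have bas: "ixs \<noteq> []" "length xs = length ixs" "distinct ixs" "set ixs \<subseteq> I" "last xs = x"
    using dec_basic[OF dec] by auto
  obtain p where g: "geodesic E e x p" using geo_ex[OF e x] by blast
  obtain a b where sg: "segs e p ixs xs a b" using dec g unfolding decomp_segs by blast
  have pb: "walk E p" "hd p = e" "last p = x" "p \<noteq> []" using geo_basic[OF g] by auto
  have dp: "distinct p" using geo_distinct[OF g] .
  show ?thesis
  proof (cases "i \<in> set ixs")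
    case True
    then obtain j where j: "j < length ixs" "ixs!j = i" by (metis in_set_conv_nth)
    have th: "(THE j. j < length ixs \<and> ixs!j = i) = j"
      using j nth_eq_iff_index_eq[OF bas(3)] by (intro the_equality) auto
    have bj: "b j \<le> length p - 1" "a j \<le> b j" using segs_bj[OF sg bas(1) j(1)] by auto
    have r1: "p!(b j) = xs!j" "\<forall>m. a j \<le> m \<and> m \<le> b j \<longrightarrow> p!m \<in> VS (ixs!j)"
      using sg j unfolding segs_def by auto
    have pbj: "p!(b j) = xs!j" "p!(b j) \<in> VS i" using r1 bj(2) j(2) by auto
    have bjl: "b j < length p" using bj pb(4) by (cases p) auto
    have gr: "geodesic E x (p!(b j)) (rev (drop (b j) p))" using geo_rev[OF geo_drop[OF g bjl]] .
    have bl: "butlast (rev (drop (b j) p)) = rev (drop (Suc (b j)) p)"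
      using bjl by (simp add: butlast_rev drop_Suc tl_drop)
    have av: "set (rev (drop (Suc (b j)) p)) \<inter> VS i = {}"
    proof (rule ccontr)
      assume "set (rev (drop (Suc (b j)) p)) \<inter> VS i \<noteq> {}"
      then obtain z where z: "z \<in> set (drop (Suc (b j)) p)" "z \<in> VS i" by auto
      then obtain r where r: "r < length (drop (Suc (b j)) p)" "drop (Suc (b j)) p ! r = z"
        by (metis in_set_conv_nth)
      define m where "m = Suc (b j) + r"
      have m: "m < length p" "p!m = z" "b j < m" using r unfolding m_def by auto
      have es: "ES i (p!(b j)) (p!Suc (b j))"
        using seg[OF i pb(1) dp _ m(1) pbj(2)] m z(2) by simp
      have "Suc (b j) < length p" using m by simp
      from CovP[OF sg bas(1,4) i this es]
      obtain j' where j': "j' < length ixs" "a j' \<le> b j" "b j < b j'" "ixs!j' = i" by blast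
      then have "j' = j" using j nth_eq_iff_index_eq[OF bas(3)] by auto
      then show False using j' by simp
    qed
    have "p!(b j) = entry E VS x i" using entry_char[OF i x gr pbj(2)] bl av by simp
    then show ?thesis using True th pbj(1) by simp
  next
    case False
    show ?thesis
    proof (cases "set p \<inter> VS i = {}")
      case True
      then show ?thesis using PC_avoid[OF i e x g True] False by simp
    next
      case nav: False
      then have "\<exists>z\<in>set p. z \<in> VS i" by blast
      then obtain ys z zs where sp: "p = ys @ z # zs" "z \<in> VS i" "\<forall>y\<in>set ys. y \<notin> VS i"
        by (rule split_list_first_propE)
      define k where "k = length ys"
      have k: "k < length p" "p!k = z" unfolding k_def using sp by auto
      have ze: "z = entry E VS e i"
      proof -
        have "\<forall>k'<k. p!k' \<notin> VS i" using sp unfolding k_def by (auto simp: nth_append)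
        then show ?thesis using entry_first[OF i e g k(1)] k sp(2) by simp
      qed
      have avz: "set zs \<inter> VS i = {}"
      proof (rule ccontr)
        assume "set zs \<inter> VS i \<noteq> {}"
        then obtain w where w: "w \<in> set zs" "w \<in> VS i" by blast
        then obtain r where r: "r < length zs" "zs!r = w" by (metis in_set_conv_nth)
        define m where "m = Suc k + r"
        have m: "m < length p" "p!m = w" "k < m" using r sp unfolding m_def k_def by (auto simp: nth_append)
        have "p!k \<in> VS i" "p!m \<in> VS i" "k \<le> m" using m k sp(2) w(2) by auto
        then have es: "ES i (p!k) (p!Suc k)" using seg[OF i pb(1) dp _ m(1)] m(3) by blast
        have "Suc k < length p" using m by simp
        from CovP[OF sg bas(1,4) i this es]
        obtain j' where "j' < length ixs" "ixs!j' = i" by blast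
        then show False using False by auto
      qed
      have gd: "geodesic E z x (z # zs)" using geo_drop[OF g k(1)] k sp unfolding k_def by simp
      have gr: "geodesic E x z (rev (z # zs))" using geo_rev[OF gd] .
      have "butlast (rev (z # zs)) = rev zs" by simp
      then have "z = entry E VS x i" using entry_char[OF i x gr sp(2)] avz by simp
      then show ?thesis using ze False by simp
    qed
  qed
qed

end



context TG begin

lemma BS:
  assumes g0: "geodesic E e x p0" and g: "geodesic E e x p" and t: "Suc t < length p0"
    and nb: "\<forall>i\<in>I. \<not> ES i (p0!t) (p0!Suc t)"
  shows "p!t = p0!t \<and> p!Suc t = p0!Suc t"
proof (rule ccontr)
  assume ne: "\<not> (p!t = p0!t \<and> p!Suc t = p0!Suc t)"
  define u where "u = p0!t"
  define v where "v = p0!Suc t"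
  have p0b: "walk E p0" "hd p0 = e" "last p0 = x" "length p0 = Suc (d e x)" "p0 \<noteq> []" using geo_basic[OF g0] by auto
  have pb: "walk E p" "hd p = e" "last p = x" "length p = Suc (d e x)" "p \<noteq> []" using geo_basic[OF g] by auto
  have dp0: "distinct p0" using geo_distinct[OF g0] .
  have du: "d e u = t" "d e v = Suc t" unfolding u_def v_def using geo_pos[OF g0] t by auto
  define A1 where "A1 = drop (Suc t) p0"
  define A3 where "A3 = take (Suc t) p0"
  have w1: "walk (avoid u v) A1" unfolding walk_def A1_def u_def v_def
  proof (intro conjI allI impI)
    show "drop (Suc t) p0 \<noteq> []" using t by simp
    fix k assume "Suc k < length (drop (Suc t) p0)"
    then have k: "Suc (Suc t + k) < length p0" "Suc t + k \<noteq> t" by auto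
    then show "avoid (p0!t) (p0!Suc t) (drop (Suc t) p0 ! k) (drop (Suc t) p0 ! Suc k)"
      using avoid_idx[OF p0b(1) dp0 t k(1,2)] by simp
  qed
  have w3: "walk (avoid u v) A3" unfolding walk_def A3_def u_def v_def
  proof (intro conjI allI impI)
    show "take (Suc t) p0 \<noteq> []" using p0b by simp
    fix k assume "Suc k < length (take (Suc t) p0)"
    then have k: "Suc k < length p0" "k < t" by auto
    then show "avoid (p0!t) (p0!Suc t) (take (Suc t) p0 ! k) (take (Suc t) p0 ! Suc k)"
      using avoid_idx[OF p0b(1) dp0 t k(1)] by simp
  qed
  have w2: "walk (avoid u v) p" unfolding walk_def
  proof (intro conjI allI impI)
    show "p \<noteq> []" using pb by simp
    fix k assume k: "Suc k < length p"
    have dk: "d e (p!k) = k" "d e (p!Suc k) = Suc k" using geo_pos[OF g] k by auto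
    show "avoid u v (p!k) (p!Suc k)" unfolding avoid_def
    proof (intro conjI)
      show "E (p!k) (p!Suc k)" using walk_nth[OF pb(1) k] .
      show "\<not> (p!k = u \<and> p!Suc k = v)"
      proof
        assume a: "p!k = u \<and> p!Suc k = v"
        then have "k = t" using dk du by simp
        then show False using ne a unfolding u_def v_def by simp
      qed
      show "\<not> (p!k = v \<and> p!Suc k = u)"
      proof
        assume a: "p!k = v \<and> p!Suc k = u"
        then have "k = Suc t" "Suc k = t" using dk du by auto
        then show False by simp
      qed
    qed
  qed
  have w2r: "walk (avoid u v) (rev p)" using walk_rev[OF _ w2] avoid_sym by blast
  have A1ne: "A1 \<noteq> []" "A3 \<noteq> []" using w1 w3 by (auto simp: walk_def)
  have rne: "rev p \<noteq> []" using pb by simp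
  have hA1: "hd A1 = v" unfolding A1_def v_def using t by (simp add: hd_drop_conv_nth)
  have lA1: "last A1 = x" unfolding A1_def using t p0b by simp
  have hA3: "hd A3 = e" unfolding A3_def using p0b by (simp add: hd_take)
  have lA3: "last A3 = u" unfolding A3_def u_def using last_take_Suc[of t p0] t by simp
  have W1: "walk (avoid u v) (A1 @ tl (rev p))" using walk_append[OF w1 w2r] lA1 pb by (simp add: hd_rev)
  have lW1: "last (A1 @ tl (rev p)) = e" using last_app_tl[OF A1ne(1) rne] lA1 pb by (simp add: hd_rev last_rev)
  have W1ne: "A1 @ tl (rev p) \<noteq> []" using A1ne by simp
  have W: "walk (avoid u v) ((A1 @ tl (rev p)) @ tl A3)" using walk_append[OF W1 w3] lW1 hA3 by simp
  have hW: "hd ((A1 @ tl (rev p)) @ tl A3) = v" using hA1 A1ne by simp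
  have lW: "last ((A1 @ tl (rev p)) @ tl A3) = u" using last_app_tl[OF W1ne A1ne(2)] lW1 hA3 lA3 by simp
  have e: "E u v" unfolding u_def v_def using walk_nth[OF p0b(1) t] .
  have nb': "\<forall>i\<in>I. \<not> ES i u v" using nb unfolding u_def v_def .
  show False using BL[OF e nb' W hW lW] .
qed

lemma B_struct:
  assumes e: "e \<in> V" and i: "i \<in> I" and g: "geodesic E e x p" and xi: "x \<in> VS i"
  shows "d e (entry E VS e i) < length p \<and> p!(d e (entry E VS e i)) = entry E VS e i
    \<and> (\<forall>m. d e (entry E VS e i) \<le> m \<and> m < length p \<longrightarrow> p!m \<in> VS i)
    \<and> (\<forall>m. d e (entry E VS e i) \<le> m \<and> Suc m < length p \<longrightarrow> ES i (p!m) (p!Suc m))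
    \<and> (\<forall>m<d e (entry E VS e i). p!m \<notin> VS i)"
proof -
  have pb: "walk E p" "hd p = e" "last p = x" "p \<noteq> []" using geo_basic[OF g] by auto
  have dp: "distinct p" using geo_distinct[OF g] .
  have "\<exists>z\<in>set p. z \<in> VS i" using pb xi by auto
  then obtain ys z zs where sp: "p = ys @ z # zs" "z \<in> VS i" "\<forall>y\<in>set ys. y \<notin> VS i"
    by (rule split_list_first_propE)
  define k where "k = length ys"
  have k: "k < length p" "p!k = z" unfolding k_def using sp by auto
  have bef: "\<forall>k'<k. p!k' \<notin> VS i" using sp unfolding k_def by (auto simp: nth_append)
  have ze: "p!k = entry E VS e i" using entry_first[OF i e g k(1)] k sp(2) bef by simp
  have dk: "d e (entry E VS e i) = k" using geo_pos[OF g k(1)] ze by simp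
  define m0 where "m0 = length p - 1"
  have m0: "m0 < length p" "p!m0 \<in> VS i" "k \<le> m0" unfolding m0_def using pb xi k
    by (auto simp: last_conv_nth)
  have sg: "(\<forall>t. k \<le> t \<and> t \<le> m0 \<longrightarrow> p!t \<in> VS i) \<and> (\<forall>t. k \<le> t \<and> t < m0 \<longrightarrow> ES i (p!t) (p!Suc t))"
    using seg[OF i pb(1) dp m0(3) m0(1)] k sp(2) m0(2) by simp
  show ?thesis unfolding dk
  proof (intro conjI allI impI)
    show "k < length p" using k by simp
    show "p!k = entry E VS e i" using ze .
    fix m
    show "k \<le> m \<and> m < length p \<Longrightarrow> p!m \<in> VS i" using sg unfolding m0_def by auto
    show "k \<le> m \<and> Suc m < length p \<Longrightarrow> ES i (p!m) (p!Suc m)" using sg unfolding m0_def by auto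
    show "m < k \<Longrightarrow> p!m \<notin> VS i" using bef by simp
  qed
qed


lemma EXT:
  assumes dec: "decomp V E I VS ES e y ixs xs" and i: "i \<in> I" and ni: "i \<notin> set ixs"
    and ts: "t \<le> s" "s \<le> Suc t" and ty: "t = d e y"
    and H: "\<And>p. geodesic E e x p \<Longrightarrow> s < length p \<and> p!t = y \<and> p!s = entry E VS e i
        \<and> (\<forall>m. s \<le> m \<and> m < length p \<longrightarrow> p!m \<in> VS i)
        \<and> (\<forall>m. s \<le> m \<and> Suc m < length p \<longrightarrow> ES i (p!m) (p!Suc m))
        \<and> (s = Suc t \<longrightarrow> (\<forall>i'\<in>I. \<not> ES i' y (p!s)))"
  shows "decomp V E I VS ES e x (ixs @ [i]) (xs @ [x])"
proof -
  have bas: "ixs \<noteq> []" "length xs = length ixs" "distinct ixs" "set ixs \<subseteq> I" "last xs = x \<or> True"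
    using dec_basic[OF dec] by auto
  define L where "L = length ixs"
  have L0: "0 < L" using bas unfolding L_def by simp
  have segsp: "\<exists>a b. segs e p (ixs @ [i]) (xs @ [x]) a b" if g: "geodesic E e x p" for p
  proof -
    have Hp: "s < length p" "p!t = y" "p!s = entry E VS e i"
      "\<forall>m. s \<le> m \<and> m < length p \<longrightarrow> p!m \<in> VS i"
      "\<forall>m. s \<le> m \<and> Suc m < length p \<longrightarrow> ES i (p!m) (p!Suc m)"
      "s = Suc t \<longrightarrow> (\<forall>i'\<in>I. \<not> ES i' y (p!s))" using H[OF g] by auto
    have pb: "last p = x" "p \<noteq> []" using geo_basic[OF g] by auto
    have tl: "t < length p" using Hp(1) ts by simp
    define q where "q = take (Suc t) p"
    have gq: "geodesic E e y q" unfolding q_def using geo_take[OF g tl] Hp(2) by simp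
    have lq: "length q = Suc t" unfolding q_def using tl by simp
    have qn: "\<And>m. m \<le> t \<Longrightarrow> q!m = p!m" unfolding q_def by simp
    obtain a b where sq: "segs e q ixs xs a b" using dec gq unfolding decomp_segs by blast
    have sq1: "a 0 = 0" "b (L - 1) = t" using sq lq unfolding segs_def L_def by auto
    have sq2: "\<forall>j<L. a j \<le> b j \<and> q ! (a j) = entry E VS e (ixs!j) \<and> q ! (b j) = xs!j \<and>
             (\<forall>m. a j \<le> m \<and> m \<le> b j \<longrightarrow> q!m \<in> VS (ixs!j)) \<and>
             (\<forall>m. a j \<le> m \<and> m < b j \<longrightarrow> ES (ixs!j) (q!m) (q!Suc m))"
      using sq unfolding segs_def L_def by blast
    have sq3: "\<forall>j. Suc j < L \<longrightarrow> b j \<le> a (Suc j) \<and> a (Suc j) \<le> Suc (b j) \<and>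
             (a (Suc j) = Suc (b j) \<longrightarrow> (\<forall>i\<in>I. \<not> ES i (q ! b j) (q ! a (Suc j))))"
      using sq unfolding segs_def L_def by blast
    have bjt: "\<And>j. j < L \<Longrightarrow> b j \<le> t" using segs_bj[OF sq bas(1)] lq unfolding L_def by simp
    define a' where "a' = (\<lambda>j. if j < L then a j else s)"
    define b' where "b' = (\<lambda>j. if j < L then b j else length p - 1)"
    have "segs e p (ixs @ [i]) (xs @ [x]) a' b'"
      unfolding segs_def
    proof (intro conjI)
      show "a' 0 = 0" unfolding a'_def using L0 sq1 by simp
      show "b' (length (ixs @ [i]) - 1) = length p - 1" unfolding b'_def L_def by simp
    next
      show "\<forall>j<length (ixs @ [i]). a' j \<le> b' j \<and> p ! (a' j) = entry E VS e ((ixs @ [i])!j) \<and> p ! (b' j) = (xs @ [x])!j \<and>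
             (\<forall>m. a' j \<le> m \<and> m \<le> b' j \<longrightarrow> p!m \<in> VS ((ixs @ [i])!j)) \<and>
             (\<forall>m. a' j \<le> m \<and> m < b' j \<longrightarrow> ES ((ixs @ [i])!j) (p!m) (p!Suc m))"
      proof (intro allI impI)
      fix j assume j: "j < length (ixs @ [i])"
      then have j': "j < Suc L" unfolding L_def by simp
      show "a' j \<le> b' j \<and> p ! (a' j) = entry E VS e ((ixs @ [i])!j) \<and> p ! (b' j) = (xs @ [x])!j \<and>
             (\<forall>m. a' j \<le> m \<and> m \<le> b' j \<longrightarrow> p!m \<in> VS ((ixs @ [i])!j)) \<and>
             (\<forall>m. a' j \<le> m \<and> m < b' j \<longrightarrow> ES ((ixs @ [i])!j) (p!m) (p!Suc m))"
      proof (cases "j < L")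
        case True
        have r: "a j \<le> b j" "q ! (a j) = entry E VS e (ixs!j)" "q ! (b j) = xs!j"
             "\<forall>m. a j \<le> m \<and> m \<le> b j \<longrightarrow> q!m \<in> VS (ixs!j)"
             "\<forall>m. a j \<le> m \<and> m < b j \<longrightarrow> ES (ixs!j) (q!m) (q!Suc m)" using sq2 True by auto
        have bt: "b j \<le> t" using bjt[OF True] .
        have ix: "(ixs @ [i])!j = ixs!j" "(xs @ [x])!j = xs!j" using True bas(2) unfolding L_def
          by (auto simp: nth_append)
        have ab': "a' j = a j" "b' j = b j" unfolding a'_def b'_def using True by auto
        have at: "a j \<le> t" using r(1) bt by simp
        have f1: "p ! a j = entry E VS e (ixs ! j)" using r(2) qn[OF at] by simp
        have f2: "p ! b j = xs ! j" using r(3) qn[OF bt] by simp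
        have f3: "\<forall>m. a j \<le> m \<and> m \<le> b j \<longrightarrow> p!m \<in> VS (ixs!j)" using r(4) qn bt by auto
        have f4: "\<forall>m. a j \<le> m \<and> m < b j \<longrightarrow> ES (ixs!j) (p!m) (p!Suc m)"
          using r(5) qn bt by auto
        show ?thesis unfolding ab' ix using r(1) f1 f2 f3 f4 by blast
      next
        case False
        then have jL: "j = L" using j' by simp
        have ix: "(ixs @ [i])!j = i" "(xs @ [x])!j = x" using jL bas(2) unfolding L_def
          by (auto simp: nth_append)
        have px: "p ! (length p - 1) = x" using pb by (simp add: last_conv_nth)
        show ?thesis unfolding a'_def b'_def ix using False Hp px by auto
      qed
      qed
    next
      show "\<forall>j. Suc j < length (ixs @ [i]) \<longrightarrow> b' j \<le> a' (Suc j) \<and> a' (Suc j) \<le> Suc (b' j) \<and>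
             (a' (Suc j) = Suc (b' j) \<longrightarrow> (\<forall>i\<in>I. \<not> ES i (p ! b' j) (p ! a' (Suc j))))"
      proof (intro allI impI)
      fix j assume j: "Suc j < length (ixs @ [i])"
      then have j': "Suc j < Suc L" unfolding L_def by simp
      show "b' j \<le> a' (Suc j) \<and> a' (Suc j) \<le> Suc (b' j) \<and>
             (a' (Suc j) = Suc (b' j) \<longrightarrow> (\<forall>i\<in>I. \<not> ES i (p ! b' j) (p ! a' (Suc j))))"
      proof (cases "Suc j < L")
        case True
        have r: "b j \<le> a (Suc j)" "a (Suc j) \<le> Suc (b j)"
          "a (Suc j) = Suc (b j) \<longrightarrow> (\<forall>i\<in>I. \<not> ES i (q ! b j) (q ! a (Suc j)))" using sq3 True by auto
        have "a (Suc j) \<le> b (Suc j)" using sq2 True by auto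
        then have at: "a (Suc j) \<le> t" "b j \<le> t" using bjt[OF True] bjt[of j] True by auto
        have r3: "a (Suc j) = Suc (b j) \<longrightarrow> (\<forall>i\<in>I. \<not> ES i (p ! b j) (p ! a (Suc j)))"
          using r(3) unfolding qn[OF at(1)] qn[OF at(2)] .
        have ab': "a' j = a j" "b' j = b j" "a' (Suc j) = a (Suc j)" unfolding a'_def b'_def using True by auto
        show ?thesis unfolding ab' using r(1,2) r3 by blast
      next
        case False
        then have jL: "Suc j = L" using j' by simp
        have "j = L - 1" using jL by simp
        then have bj: "b j = t" using sq1 by simp
        show ?thesis unfolding a'_def b'_def using jL bj ts Hp(2,6) by simp
      qed
      qed
    qed
    then show ?thesis by blast
  qed
  show ?thesis unfolding decomp_segs
    using bas ni i segsp by simp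
qed


definition SPd where
  "SPd e x ixs \<longleftrightarrow> (\<forall>p. geodesic E e x p \<longrightarrow> 2 \<le> length p \<longrightarrow> (\<exists>i\<in>I. ES i (p!(length p - 2)) x)
     \<longrightarrow> d e (entry E VS e (last ixs)) < d e x)"

lemma notin_ixs:
  assumes dec: "decomp V E I VS ES e y ixs xs" and gq: "geodesic E e y q" and i: "i \<in> I"
    and small: "d e y < d e (entry E VS e i)"
  shows "i \<notin> set ixs"
proof
  assume "i \<in> set ixs"
  then obtain j where j: "j < length ixs" "ixs!j = i" by (metis in_set_conv_nth)
  have bas: "ixs \<noteq> []" using dec_basic[OF dec] by simp
  obtain a b where sq: "segs e q ixs xs a b" using dec gq unfolding decomp_segs by blast
  have qa: "q!(a j) = entry E VS e i" using sq j unfolding segs_def by auto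
  have lq: "length q = Suc (d e y)" using geo_basic[OF gq] by simp
  have "a j \<le> length q - 1" using segs_bj[OF sq bas j(1)] by simp
  then have aj: "a j < length q" using lq by simp
  have "d e (q!(a j)) = a j" using geo_pos[OF gq aj] .
  then show False using qa aj lq small by simp
qed

lemma DE:
  assumes e: "e \<in> V"
  shows "x \<in> V \<Longrightarrow> \<exists>ixs xs. decomp V E I VS ES e x ixs xs \<and> SPd e x ixs"
proof (induction "d e x" arbitrary: x rule: less_induct)
  case less
  have x: "x \<in> V" using less.prems .
  obtain p0 where g0: "geodesic E e x p0" using geo_ex[OF e x] by blast
  have p0b: "walk E p0" "hd p0 = e" "last p0 = x" "length p0 = Suc (d e x)" "p0 \<noteq> []"
    using geo_basic[OF g0] by auto
  define n where "n = d e x"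
  show ?case
  proof (cases "x = e")
    case True
    obtain k where k: "k \<in> I" "e \<in> VS k" using cover[OF e] by blast
    have g1: "geodesic E e e [e]" unfolding geodesic_def using d_refl[of e] by simp
    have ek: "e = entry E VS e k" using entry_char[OF k(1) e g1 k(2)] by simp
    have dec: "decomp V E I VS ES e x [k] [e]"
      unfolding decomp_segs
    proof (intro conjI allI impI)
      show "[k] \<noteq> []" "length [e] = length [k]" "distinct [k]" "set [k] \<subseteq> I" "last [e] = x"
        using k True by auto
      fix p assume gp: "geodesic E e x p"
      have "length p = 1" using geo_basic[OF gp] True d_refl[of e] by simp
      moreover have "hd p = e" using geo_basic[OF gp] by simp
      ultimately have p: "p = [e]" by (cases p) auto
      have "segs e p [k] [e] (\<lambda>_. 0) (\<lambda>_. 0)" unfolding segs_def p using ek[symmetric] k(2) by auto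
      then show "\<exists>a b. segs e p [k] [e] a b" by blast
    qed
    have "SPd e x [k]" unfolding SPd_def
    proof (intro allI impI)
      fix p assume gp: "geodesic E e x p" and "2 \<le> length p"
      then show "d e (entry E VS e (last [k])) < d e x" using geo_basic[OF gp] True d_refl[of e] by simp
    qed
    then show ?thesis using dec by blast
  next
    case xe: False
    have n0: "0 < n" using d_zero[OF e x] xe unfolding n_def by auto
    define w where "w = p0!(n - 1)"
    have nl: "Suc (n - 1) < length p0" "n - 1 < length p0" using p0b n0 unfolding n_def by auto
    have pn: "p0!n = x" using p0b unfolding n_def by (simp add: last_conv_nth)
    have ewx: "E w x" using walk_nth[OF p0b(1) nl(1)] pn n0 unfolding w_def by simp
    have wV: "w \<in> V" using E_V[OF ewx] by simp
    have dw: "d e w = n - 1" using geo_pos[OF g0 nl(2)] unfolding w_def by simp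
    show ?thesis
    proof (cases "\<forall>i\<in>I. \<not> ES i w x")
      case A: True
      obtain ixs xs where IH: "decomp V E I VS ES e w ixs xs" using less.hyps[OF _ wV] dw n0 unfolding n_def by force
      obtain k where k: "k \<in> I" "x \<in> VS k" using cover[OF x] by blast
      have allw: "\<And>p. geodesic E e x p \<Longrightarrow> p!(n-1) = w \<and> p!n = x \<and> length p = Suc n"
      proof -
        fix p assume gp: "geodesic E e x p"
        have "p!(n-1) = p0!(n-1) \<and> p!Suc (n-1) = p0!Suc (n-1)"
          using BS[OF g0 gp nl(1)] A pn n0 unfolding w_def by simp
        moreover have "length p = Suc n" using geo_basic[OF gp] unfolding n_def by simp
        ultimately show "p!(n-1) = w \<and> p!n = x \<and> length p = Suc n" using n0 pn unfolding w_def by simp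
      qed
      have ekx: "x = entry E VS e k"
      proof -
        have "set (butlast p0) \<inter> VS k = {}"
        proof (rule ccontr)
          assume "set (butlast p0) \<inter> VS k \<noteq> {}"
          then obtain z where z: "z \<in> set (butlast p0)" "z \<in> VS k" by blast
          then obtain m where m: "m < length (butlast p0)" "butlast p0 ! m = z" by (metis in_set_conv_nth)
          have m': "m < n" "p0!m = z" using m p0b unfolding n_def by (auto simp: nth_butlast)
          have "p0!m \<in> VS k" "p0!n \<in> VS k" "m \<le> n" "n < length p0" using m' z k pn p0b unfolding n_def by auto
          then have "\<forall>t. m \<le> t \<and> t < n \<longrightarrow> ES k (p0!t) (p0!Suc t)"
            using seg[OF k(1) p0b(1) geo_distinct[OF g0], of m n] by blast
          moreover have "m \<le> n - 1" "n - 1 < n" using m' n0 by auto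
          ultimately have "ES k (p0!(n-1)) (p0!Suc (n-1))" by blast
          then show False using A k(1) pn n0 unfolding w_def by simp
        qed
        then show ?thesis using entry_char[OF k(1) e g0 k(2)] by simp
      qed
      have ni: "k \<notin> set ixs"
      proof -
        have gq: "geodesic E e w (take n p0)" using geo_take[OF g0 nl(2)] n0 unfolding w_def by simp
        show ?thesis using notin_ixs[OF IH gq k(1)] ekx dw n0 unfolding n_def by simp
      qed
      have dec: "decomp V E I VS ES e x (ixs @ [k]) (xs @ [x])"
      proof (rule EXT[OF IH k(1) ni, of "n-1" n])
        show "n - 1 \<le> n" "n \<le> Suc (n - 1)" "n - 1 = d e w" using dw by auto
        fix p assume gp: "geodesic E e x p"
        have ap: "p!(n-1) = w" "p!n = x" "length p = Suc n" using allw[OF gp] by auto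
        show "n < length p \<and> p!(n-1) = w \<and> p!n = entry E VS e k
          \<and> (\<forall>m. n \<le> m \<and> m < length p \<longrightarrow> p!m \<in> VS k)
          \<and> (\<forall>m. n \<le> m \<and> Suc m < length p \<longrightarrow> ES k (p!m) (p!Suc m))
          \<and> (n = Suc (n - 1) \<longrightarrow> (\<forall>i'\<in>I. \<not> ES i' w (p!n)))"
        proof (intro conjI allI impI)
          show "n < length p" "p!(n-1) = w" "p!n = entry E VS e k" using ap ekx by auto
          fix m
          show "n \<le> m \<and> m < length p \<Longrightarrow> p!m \<in> VS k"
          proof -
            assume "n \<le> m \<and> m < length p"
            then have "m = n" using ap by simp
            then show ?thesis using ap k by simp
          qed
          show "n \<le> m \<and> Suc m < length p \<Longrightarrow> ES k (p!m) (p!Suc m)" using ap by auto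
        next
          show "\<forall>i'\<in>I. \<not> ES i' w (p!n)" using A ap by simp
        qed
      qed
      have "SPd e x (ixs @ [k])" unfolding SPd_def
      proof (intro allI impI)
        fix p assume gp: "geodesic E e x p" and l2: "2 \<le> length p" and ex: "\<exists>i\<in>I. ES i (p!(length p - 2)) x"
        have ap: "p!(n-1) = w" "length p = Suc n" using allw[OF gp] by auto
        then have "length p - 2 = n - 1" by simp
        then show "d e (entry E VS e (last (ixs @ [k]))) < d e x" using ex ap A by auto
      qed
      then show ?thesis using dec by blast
    next
      case B: False
      then obtain i where i: "i \<in> I" "ES i w x" by blast
      have xi: "x \<in> VS i" using ES_VS[OF i] by simp
      define c where "c = entry E VS e i"
      define k0 where "k0 = d e c"
      have cV: "c \<in> VS i" "c \<in> V" using entry_props[OF i(1) e] VS_V[OF i(1)] unfolding c_def by auto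
      have Bs: "\<And>p. geodesic E e x p \<Longrightarrow> k0 < length p \<and> p!k0 = c \<and> (\<forall>m. k0 \<le> m \<and> m < length p \<longrightarrow> p!m \<in> VS i)
        \<and> (\<forall>m. k0 \<le> m \<and> Suc m < length p \<longrightarrow> ES i (p!m) (p!Suc m)) \<and> (\<forall>m<k0. p!m \<notin> VS i)"
        using B_struct[OF e i(1) _ xi] unfolding k0_def c_def by blast
      have k0n: "k0 < n"
      proof (rule ccontr)
        assume "\<not> k0 < n"
        moreover have "k0 < Suc n" using Bs[OF g0] p0b unfolding n_def by simp
        ultimately have "k0 = n" by simp
        then have "w \<notin> VS i" using Bs[OF g0] n0 unfolding w_def by simp
        then show False using ES_VS[OF i] by simp
      qed
      show ?thesis
      proof (cases "c = e")
        case True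
        have k00: "k0 = 0" unfolding k0_def using True d_refl by simp
        have dec: "decomp V E I VS ES e x [i] [x]"
          unfolding decomp_segs
        proof (intro conjI allI impI)
          show "[i] \<noteq> []" "length [x] = length [i]" "distinct [i]" "set [i] \<subseteq> I" "last [x] = x"
            using i by auto
          fix p assume gp: "geodesic E e x p"
          have bp: "0 < length p \<and> p!0 = c \<and> (\<forall>m. m < length p \<longrightarrow> p!m \<in> VS i)
            \<and> (\<forall>m. Suc m < length p \<longrightarrow> ES i (p!m) (p!Suc m))" using Bs[OF gp] k00 by simp
          have lp: "last p = x" "p \<noteq> []" using geo_basic[OF gp] by auto
          have px: "p!(length p - 1) = x" using last_conv_nth[OF lp(2)] lp(1) by simp
          have mm: "\<forall>m. m \<le> length p - 1 \<longrightarrow> p!m \<in> VS i"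
          proof (intro allI impI)
            fix m assume "m \<le> length p - 1"
            then have "m < length p" using lp(2) by (cases p) auto
            then show "p!m \<in> VS i" using bp by blast
          qed
          have "segs e p [i] [x] (\<lambda>_. 0) (\<lambda>_. length p - 1)" unfolding segs_def
            using bp px mm unfolding c_def by auto
          then show "\<exists>a b. segs e p [i] [x] a b" by blast
        qed
        have "SPd e x [i]" unfolding SPd_def using k0n unfolding k0_def c_def n_def by simp
        then show ?thesis using dec by blast
      next
        case ce: False
        have k0p: "0 < k0" using d_zero[OF e cV(2)] ce unfolding k0_def by auto
        define w' where "w' = p0!(k0 - 1)"
        have kl: "Suc (k0 - 1) < length p0" "k0 - 1 < length p0" "k0 < length p0"
          using k0n p0b k0p unfolding n_def by auto
        have p0k: "p0!k0 = c" using Bs[OF g0] by simp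
        have ew: "E w' c" using walk_nth[OF p0b(1) kl(1)] p0k k0p unfolding w'_def by simp
        have w'V: "w' \<in> V" using E_V[OF ew] by simp
        have dw': "d e w' = k0 - 1" using geo_pos[OF g0 kl(2)] unfolding w'_def by simp
        show ?thesis
        proof (cases "\<forall>i'\<in>I. \<not> ES i' w' c")
          case B1: True
          obtain ixs xs where IH: "decomp V E I VS ES e w' ixs xs"
            using less.hyps[OF _ w'V] dw' k0n unfolding n_def by force
          have ni: "i \<notin> set ixs"
          proof -
            have gq: "geodesic E e w' (take (Suc (k0 - 1)) p0)" using geo_take[OF g0 kl(2)] unfolding w'_def by simp
            show ?thesis using notin_ixs[OF IH gq i(1)] dw' k0p unfolding k0_def c_def by simp
          qed
          have dec: "decomp V E I VS ES e x (ixs @ [i]) (xs @ [x])"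
          proof (rule EXT[OF IH i(1) ni, of "k0 - 1" k0])
            show "k0 - 1 \<le> k0" "k0 \<le> Suc (k0 - 1)" "k0 - 1 = d e w'" using dw' by auto
            fix p assume gp: "geodesic E e x p"
            have bp: "k0 < length p" "p!k0 = c" "\<forall>m. k0 \<le> m \<and> m < length p \<longrightarrow> p!m \<in> VS i"
              "\<forall>m. k0 \<le> m \<and> Suc m < length p \<longrightarrow> ES i (p!m) (p!Suc m)" using Bs[OF gp] by auto
            have nb: "\<forall>i\<in>I. \<not> ES i (p0!(k0-1)) (p0!Suc (k0-1))" using B1 p0k k0p unfolding w'_def by simp
            have "p!(k0-1) = p0!(k0-1)" using BS[OF g0 gp kl(1) nb] by simp
            then have pw: "p!(k0-1) = w'" unfolding w'_def by simp
            show "k0 < length p \<and> p!(k0-1) = w' \<and> p!k0 = entry E VS e i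
              \<and> (\<forall>m. k0 \<le> m \<and> m < length p \<longrightarrow> p!m \<in> VS i)
              \<and> (\<forall>m. k0 \<le> m \<and> Suc m < length p \<longrightarrow> ES i (p!m) (p!Suc m))
              \<and> (k0 = Suc (k0 - 1) \<longrightarrow> (\<forall>i'\<in>I. \<not> ES i' w' (p!k0)))"
              using bp pw B1 unfolding c_def by simp
          qed
          have "SPd e x (ixs @ [i])" unfolding SPd_def using k0n unfolding k0_def c_def n_def by simp
          then show ?thesis using dec by blast
        next
          case B2: False
          then obtain i' where i': "i' \<in> I" "ES i' w' c" by blast
          obtain ixs xs where IH: "decomp V E I VS ES e c ixs xs" "SPd e c ixs"
            using less.hyps[OF _ cV(2)] k0n unfolding n_def k0_def by force
          define q0 where "q0 = take (Suc k0) p0"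
          have gq: "geodesic E e c q0" unfolding q0_def using geo_take[OF g0 kl(3)] p0k by simp
          have lq: "length q0 = Suc k0" unfolding q0_def using kl by simp
          have q2: "q0!(length q0 - 2) = w'" unfolding lq q0_def w'_def using k0p kl
            by (simp add: Suc_diff_Suc numeral_2_eq_2)
          have small: "d e (entry E VS e (last ixs)) < k0"
            using IH(2) gq lq q2 i' k0p unfolding SPd_def k0_def by auto
          have ni: "i \<notin> set ixs"
          proof
            assume "i \<in> set ixs"
            then obtain j where j: "j < length ixs" "ixs!j = i" by (metis in_set_conv_nth)
            have bas: "ixs \<noteq> []" using dec_basic[OF IH(1)] by simp
            obtain a b where sq: "segs e q0 ixs xs a b" using IH(1) gq unfolding decomp_segs by blast
            have ab: "\<forall>j<length ixs. a j \<le> b j" and ba: "\<forall>j. Suc j < length ixs \<longrightarrow> b j \<le> a (Suc j)"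
              using sq unfolding segs_def by auto
            have aj: "q0!(a j) = c" using sq j unfolding segs_def c_def by auto
            have ajl: "a j < length q0" using segs_bj[OF sq bas j(1)] lq by simp
            have ajk: "a j = k0" using geo_pos[OF gq ajl] aj unfolding k0_def by simp
            define L1 where "L1 = length ixs - 1"
            have L1: "L1 < length ixs" unfolding L1_def using bas by simp
            have aL: "q0!(a L1) = entry E VS e (last ixs)" using sq L1 bas unfolding segs_def L1_def
              by (auto simp: last_conv_nth)
            have aLl: "a L1 < length q0" using segs_bj[OF sq bas L1] lq by simp
            have aLk: "a L1 < k0" using geo_pos[OF gq aLl] aL small by simp
            have "j \<noteq> L1" using ajk aLk by auto
            then have "j < L1" using j L1 unfolding L1_def by simp
            then have "b j \<le> a L1" using dmono[OF ab ba, of j L1] L1 by simp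
            moreover have "a j \<le> b j" using ab j by simp
            ultimately show False using ajk aLk by simp
          qed
          have dec: "decomp V E I VS ES e x (ixs @ [i]) (xs @ [x])"
          proof (rule EXT[OF IH(1) i(1) ni, of k0 k0])
            show "k0 \<le> k0" "k0 \<le> Suc k0" "k0 = d e c" unfolding k0_def by auto
            fix p assume gp: "geodesic E e x p"
            have bp: "k0 < length p" "p!k0 = c" "\<forall>m. k0 \<le> m \<and> m < length p \<longrightarrow> p!m \<in> VS i"
              "\<forall>m. k0 \<le> m \<and> Suc m < length p \<longrightarrow> ES i (p!m) (p!Suc m)" using Bs[OF gp] by auto
            show "k0 < length p \<and> p!k0 = c \<and> p!k0 = entry E VS e i
              \<and> (\<forall>m. k0 \<le> m \<and> m < length p \<longrightarrow> p!m \<in> VS i)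
              \<and> (\<forall>m. k0 \<le> m \<and> Suc m < length p \<longrightarrow> ES i (p!m) (p!Suc m))
              \<and> (k0 = Suc k0 \<longrightarrow> (\<forall>i'\<in>I. \<not> ES i' c (p!k0)))"
              using bp unfolding c_def by simp
          qed
          have "SPd e x (ixs @ [i])" unfolding SPd_def using k0n unfolding k0_def c_def n_def by simp
          then show ?thesis using dec by blast
        qed
      qed
    qed
  qed
qed

end



context TG begin

lemma xprime_eq:
  assumes e: "e \<in> V" and x: "x \<in> V" and i: "i \<in> I"
  shows "xprime V E I VS ES e x i = entry E VS x i"
proof -
  obtain ixs xs where "decomp V E I VS ES e x ixs xs" using DE[OF e x] by blast
  then have ex: "\<exists>q. decomp V E I VS ES e x (fst q) (snd q)" by (intro exI[of _ "(ixs, xs)"]) simp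
  have dq: "decomp V E I VS ES e x (fst (dchoice V E I VS ES e x)) (snd (dchoice V E I VS ES e x))"
    unfolding dchoice_def using someI_ex[OF ex] .
  show ?thesis unfolding xprime_def Let_def using XP[OF e x dq i] .
qed

lemma main:
  assumes e: "e \<in> V" and x: "x \<in> V" and y: "y \<in> V"
  shows "real (d x y) / 2 \<le> real (dprime V E I VS ES e x y)
         \<and> real (dprime V E I VS ES e x y) \<le> 2 * real (d x y)"
proof -
  obtain p where g: "geodesic E x y p" using geo_ex[OF x y] by blast
  have c: "d x y = (\<Sum>i\<in>{i\<in>I. entry E VS x i \<noteq> entry E VS y i}. d (entry E VS x i) (entry E VS y i)) + card (BRs p)"
    using count[OF x y g] by blast
  have sT: "card (BRs p) \<le> sigma_T V E I VS e x y \<and> sigma_T V E I VS e x y \<le> d x y"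
    using sigmaT_bounds[OF x y g, of e] unfolding sigma_T_def by simp
  have setq: "{i\<in>I. xprime V E I VS ES e x i \<noteq> xprime V E I VS ES e y i} = {i\<in>I. entry E VS x i \<noteq> entry E VS y i}"
    using xprime_eq[OF e x] xprime_eq[OF e y] by auto
  have sI: "sigma_I V E I VS ES e x y = (\<Sum>i\<in>{i\<in>I. entry E VS x i \<noteq> entry E VS y i}. d (entry E VS x i) (entry E VS y i))"
    unfolding sigma_I_def setq
    by (rule sum.cong) (auto simp: xprime_eq[OF e x] xprime_eq[OF e y])
  have "d x y \<le> dprime V E I VS ES e x y" "dprime V E I VS ES e x y \<le> 2 * d x y"
    unfolding dprime_def using c sT sI by linarith+
  then show ?thesis by linarith
qed

end

theorem lemma4p6:
  fixes V :: "'v set" and E :: "'v \<Rightarrow> 'v \<Rightarrow> bool"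
    and I :: "'i set" and VS :: "'i \<Rightarrow> 'v set" and ES :: "'i \<Rightarrow> 'v \<Rightarrow> 'v \<Rightarrow> bool"
    and e :: 'v
  assumes "connected_graph V E"
    and "tree_graded V E I VS ES"
    and "e \<in> V"
    and "x \<in> V" and "y \<in> V"
  shows "real (gdist E x y) / 2 \<le> real (dprime V E I VS ES e x y)
         \<and> real (dprime V E I VS ES e x y) \<le> 2 * real (gdist E x y)"
proof -
  interpret TG V E I VS ES using assms(1,2) by unfold_locales
  show ?thesis using main[OF assms(3-5)] .
qed


end
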